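(* Let $\rho$ be a 2-qubit pure state whose Bloch representation has the form $\boldsymbol{\alpha}=O_1(\mu,0,0)^T$, $\boldsymbol{\beta}=O_2(\mu,0,0)^T$, $C=O_1\,\mathrm{diag}(1,\sin\theta,-\sin\theta)\,O_2^T$, with $\theta\in[0,\pi/2]$, $\mu=\cos\theta$, $O_1,O_2\in SO(3)$, and suppose $|\mu|\in(0,1)$. Then $I_{\chi^2,post}(\rho)<2$.
   Context: Let $\sigma_1,\sigma_2,\sigma_3$ be the Pauli matrices. For a 2-qubit density matrix $\rho$ its Bloch vector is $(b_1,\dots,b_{16})$, where $b_1=1$; $(b_2,b_3,b_4)=\boldsymbol{\alpha}$ with $\alpha_j=\operatorname{tr}((\sigma_j\otimes I)\rho)$; $(b_5,b_6,b_7)=\boldsymbol{\beta}$ with $\beta_j=\operatorname{tr}((I\otimes\sigma_j)\rho)$; and $(b_8,\dots,b_{16})$ are the entries $C_{jk}=\operatorname{tr}((\sigma_j\otimes\sigma_k)\rho)$ of the $3\times3$ matrix $C$ in row-major order. Every 2-qubit pure state has a Bloch representation of the displayed form. For $b\in[-1,1]$ and $h\in(-1,1)$, $D_{\chi^2}(b,h)=\frac{((b+1)/2)^2}{(h+1)/2}+\frac{((1-b)/2)^2}{(1-h)/2}-1$; if $h=\pm1$ and $b=h$, set $D_{\chi^2}(b,h)=0$. The posterior information content of a pure state with Bloch vector $(b_1,\dots,b_{16})$ is defined as follows. For $i=2,\dots,16$, let $b_i^{max}$ and $b_i^{min}$ be the maximum and the minimum of the $i$-th Bloch component over all 2-qubit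 pure states whose components $1,\dots,i-1$ equal $b_1,\dots,b_{i-1}$, and let $h_i=(b_i^{max}+b_i^{min})/2$. Then $I_{\chi^2,post}=\sum_{i=2}^{16}D_{\chi^2}(b_i,h_i)$. *)

theory Defs
  imports "HOL-Analysis.Analysis"
begin

definition pauli :: "nat \<Rightarrow> nat \<Rightarrow> nat \<Rightarrow> complex" where
  "pauli j r s =
     (if j = 0 then (if r = s then 1 else 0)
      else if j = 1 then (if r \<noteq> s then 1 else 0)
      else if j = 2 then (if r = 0 \<and> s = 1 then - \<i> else if r = 1 \<and> s = 0 then \<i> else 0)
      else (if r = s then (if r = 0 then 1 else -1) else 0))"

(* tensor product A \<otimes> B of 2x2 matrices, basis |ab> at index 2a+b *)
definition tensor2 :: "(nat \<Rightarrow> nat \<Rightarrow> complex) \<Rightarrow> (nat \<Rightarrow> nat \<Rightarrow> complex) \<Rightarrow> nat \<Rightarrow> nat \<Rightarrow> complex" where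
  "tensor2 A B r s = A (r div 2) (s div 2) * B (r mod 2) (s mod 2)"

definition pure_state :: "(nat \<Rightarrow> complex) \<Rightarrow> bool" where
  "pure_state \<psi> \<longleftrightarrow> (\<Sum>r<4. (cmod (\<psi> r))\<^sup>2) = 1"

definition dens :: "(nat \<Rightarrow> complex) \<Rightarrow> nat \<Rightarrow> nat \<Rightarrow> complex" where
  "dens \<psi> r s = \<psi> r * cnj (\<psi> s)"

definition trace4 :: "(nat \<Rightarrow> nat \<Rightarrow> complex) \<Rightarrow> complex" where
  "trace4 M = (\<Sum>r<4. M r r)"

definition mmult4 :: "(nat \<Rightarrow> nat \<Rightarrow> complex) \<Rightarrow> (nat \<Rightarrow> nat \<Rightarrow> complex) \<Rightarrow> nat \<Rightarrow> nat \<Rightarrow> complex" where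
  "mmult4 M N r s = (\<Sum>t<4. M r t * N t s)"

(* tr((sigma_j \<otimes> sigma_k) rho), a real number; we take its real part *)
definition pauli_exp :: "(nat \<Rightarrow> complex) \<Rightarrow> nat \<Rightarrow> nat \<Rightarrow> real" where
  "pauli_exp \<psi> j k = Re (trace4 (mmult4 (tensor2 (pauli j) (pauli k)) (dens \<psi>)))"

(* index i = 1..16 of the Bloch vector to the Pauli pair (j,k) *)
definition bloch_idx :: "nat \<Rightarrow> nat \<times> nat" where
  "bloch_idx i =
     (if i \<le> 1 then (0, 0)
      else if i \<le> 4 then (i - 1, 0)
      else if i \<le> 7 then (0, i - 4)
      else ((i - 8) div 3 + 1, (i - 8) mod 3 + 1))"

definition bloch :: "(nat \<Rightarrow> complex) \<Rightarrow> nat \<Rightarrow> real" where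
  "bloch \<psi> i = pauli_exp \<psi> (fst (bloch_idx i)) (snd (bloch_idx i))"

definition alpha_vec :: "(nat \<Rightarrow> complex) \<Rightarrow> real^3" where
  "alpha_vec \<psi> = vector [bloch \<psi> 2, bloch \<psi> 3, bloch \<psi> 4]"

definition beta_vec :: "(nat \<Rightarrow> complex) \<Rightarrow> real^3" where
  "beta_vec \<psi> = vector [bloch \<psi> 5, bloch \<psi> 6, bloch \<psi> 7]"

definition corr_mat :: "(nat \<Rightarrow> complex) \<Rightarrow> real^3^3" where
  "corr_mat \<psi> = vector [vector [bloch \<psi> 8, bloch \<psi> 9, bloch \<psi> 10],
                          vector [bloch \<psi> 11, bloch \<psi> 12, bloch \<psi> 13],
                          vector [bloch \<psi> 14, bloch \<psi> 15, bloch \<psi> 16]]"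

definition diag3 :: "real \<Rightarrow> real \<Rightarrow> real \<Rightarrow> real^3^3" where
  "diag3 a b c = vector [vector [a, 0, 0], vector [0, b, 0], vector [0, 0, c]]"

definition D_chi2 :: "real \<Rightarrow> real \<Rightarrow> real" where
  "D_chi2 b h =
     (if (h = 1 \<or> h = -1) \<and> b = h then 0
      else ((b + 1) / 2)\<^sup>2 / ((h + 1) / 2) + ((1 - b) / 2)\<^sup>2 / ((1 - h) / 2) - 1)"

definition cond_vals :: "(nat \<Rightarrow> real) \<Rightarrow> nat \<Rightarrow> real set" where
  "cond_vals b i = {bloch \<phi> i | \<phi>. pure_state \<phi> \<and> (\<forall>j\<in>{1..<i}. bloch \<phi> j = b j)}"

definition b_max :: "(nat \<Rightarrow> real) \<Rightarrow> nat \<Rightarrow> real" where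
  "b_max b i = Sup (cond_vals b i)"

definition b_min :: "(nat \<Rightarrow> real) \<Rightarrow> nat \<Rightarrow> real" where
  "b_min b i = Inf (cond_vals b i)"

definition h_mid :: "(nat \<Rightarrow> real) \<Rightarrow> nat \<Rightarrow> real" where
  "h_mid b i = (b_max b i + b_min b i) / 2"

definition I_chi2_post :: "(nat \<Rightarrow> real) \<Rightarrow> real" where
  "I_chi2_post b = (\<Sum>i=2..16. D_chi2 (b i) (h_mid b i))"

end

theory Submission
  imports Defs
begin

lemma sum4: "(\<Sum>r<(4::nat). f r) = f 0 + f 1 + f 2 + (f 3 :: 'a::comm_monoid_add)"
  by (simp add: numeral_eq_Suc lessThan_Suc add_ac)
lemma pe: "pauli_exp \<psi> j k = Re (\<Sum>r<4. \<Sum>t<4. tensor2 (pauli j) (pauli k) r t * \<psi> t * cnj (\<psi> r))"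
  unfolding pauli_exp_def trace4_def mmult4_def dens_def by (simp add: sum_distrib_right mult.assoc)
lemma bl1: "bloch \<phi> 1 = Re(\<phi> 0)*Re(\<phi> 0) + Re(\<phi> 1)*Re(\<phi> 1) + Re(\<phi> 2)*Re(\<phi> 2) + Re(\<phi> 3)*Re(\<phi> 3) + Im(\<phi> 0)*Im(\<phi> 0) + Im(\<phi> 1)*Im(\<phi> 1) + Im(\<phi> 2)*Im(\<phi> 2) + Im(\<phi> 3)*Im(\<phi> 3)"
  unfolding bloch_def bloch_idx_def pe sum4 tensor2_def pauli_def by (simp add: algebra_simps)
lemma bl2: "bloch \<phi> 2 = 2*Re(\<phi> 0)*Re(\<phi> 2) + 2*Re(\<phi> 1)*Re(\<phi> 3) + 2*Im(\<phi> 0)*Im(\<phi> 2) + 2*Im(\<phi> 1)*Im(\<phi> 3)"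
  unfolding bloch_def bloch_idx_def pe sum4 tensor2_def pauli_def by (simp add: algebra_simps)
lemma bl3: "bloch \<phi> 3 = 2*Re(\<phi> 0)*Im(\<phi> 2) + 2*Re(\<phi> 1)*Im(\<phi> 3) - 2*Re(\<phi> 2)*Im(\<phi> 0) - 2*Re(\<phi> 3)*Im(\<phi> 1)"
  unfolding bloch_def bloch_idx_def pe sum4 tensor2_def pauli_def by (simp add: algebra_simps)
lemma bl4: "bloch \<phi> 4 = Re(\<phi> 0)*Re(\<phi> 0) + Re(\<phi> 1)*Re(\<phi> 1) - Re(\<phi> 2)*Re(\<phi> 2) - Re(\<phi> 3)*Re(\<phi> 3) + Im(\<phi> 0)*Im(\<phi> 0) + Im(\<phi> 1)*Im(\<phi> 1) - Im(\<phi> 2)*Im(\<phi> 2) - Im(\<phi> 3)*Im(\<phi> 3)"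
  unfolding bloch_def bloch_idx_def pe sum4 tensor2_def pauli_def by (simp add: algebra_simps)
lemma bl5: "bloch \<phi> 5 = 2*Re(\<phi> 0)*Re(\<phi> 1) + 2*Re(\<phi> 2)*Re(\<phi> 3) + 2*Im(\<phi> 0)*Im(\<phi> 1) + 2*Im(\<phi> 2)*Im(\<phi> 3)"
  unfolding bloch_def bloch_idx_def pe sum4 tensor2_def pauli_def by (simp add: algebra_simps)
lemma bl6: "bloch \<phi> 6 = 2*Re(\<phi> 0)*Im(\<phi> 1) - 2*Re(\<phi> 1)*Im(\<phi> 0) + 2*Re(\<phi> 2)*Im(\<phi> 3) - 2*Re(\<phi> 3)*Im(\<phi> 2)"
  unfolding bloch_def bloch_idx_def pe sum4 tensor2_def pauli_def by (simp add: algebra_simps)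
lemma bl7: "bloch \<phi> 7 = Re(\<phi> 0)*Re(\<phi> 0) - Re(\<phi> 1)*Re(\<phi> 1) + Re(\<phi> 2)*Re(\<phi> 2) - Re(\<phi> 3)*Re(\<phi> 3) + Im(\<phi> 0)*Im(\<phi> 0) - Im(\<phi> 1)*Im(\<phi> 1) + Im(\<phi> 2)*Im(\<phi> 2) - Im(\<phi> 3)*Im(\<phi> 3)"
  unfolding bloch_def bloch_idx_def pe sum4 tensor2_def pauli_def by (simp add: algebra_simps)
lemma bl8: "bloch \<phi> 8 = 2*Re(\<phi> 0)*Re(\<phi> 3) + 2*Re(\<phi> 1)*Re(\<phi> 2) + 2*Im(\<phi> 0)*Im(\<phi> 3) + 2*Im(\<phi> 1)*Im(\<phi> 2)"
  unfolding bloch_def bloch_idx_def pe sum4 tensor2_def pauli_def by (simp add: algebra_simps)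
lemma bl9: "bloch \<phi> 9 = 2*Re(\<phi> 0)*Im(\<phi> 3) - 2*Re(\<phi> 1)*Im(\<phi> 2) + 2*Re(\<phi> 2)*Im(\<phi> 1) - 2*Re(\<phi> 3)*Im(\<phi> 0)"
  unfolding bloch_def bloch_idx_def pe sum4 tensor2_def pauli_def by (simp add: algebra_simps)
lemma bl10: "bloch \<phi> 10 = 2*Re(\<phi> 0)*Re(\<phi> 2) - 2*Re(\<phi> 1)*Re(\<phi> 3) + 2*Im(\<phi> 0)*Im(\<phi> 2) - 2*Im(\<phi> 1)*Im(\<phi> 3)"
  unfolding bloch_def bloch_idx_def pe sum4 tensor2_def pauli_def by (simp add: algebra_simps)
lemma bl11: "bloch \<phi> 11 = 2*Re(\<phi> 0)*Im(\<phi> 3) + 2*Re(\<phi> 1)*Im(\<phi> 2) - 2*Re(\<phi> 2)*Im(\<phi> 1) - 2*Re(\<phi> 3)*Im(\<phi> 0)"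
  unfolding bloch_def bloch_idx_def pe sum4 tensor2_def pauli_def by (simp add: algebra_simps)
lemma bl12: "bloch \<phi> 12 = -2*Re(\<phi> 0)*Re(\<phi> 3) + 2*Re(\<phi> 1)*Re(\<phi> 2) - 2*Im(\<phi> 0)*Im(\<phi> 3) + 2*Im(\<phi> 1)*Im(\<phi> 2)"
  unfolding bloch_def bloch_idx_def pe sum4 tensor2_def pauli_def by (simp add: algebra_simps)
lemma bl13: "bloch \<phi> 13 = 2*Re(\<phi> 0)*Im(\<phi> 2) - 2*Re(\<phi> 1)*Im(\<phi> 3) - 2*Re(\<phi> 2)*Im(\<phi> 0) + 2*Re(\<phi> 3)*Im(\<phi> 1)"
  unfolding bloch_def bloch_idx_def pe sum4 tensor2_def pauli_def by (simp add: algebra_simps)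
lemma bl14: "bloch \<phi> 14 = 2*Re(\<phi> 0)*Re(\<phi> 1) - 2*Re(\<phi> 2)*Re(\<phi> 3) + 2*Im(\<phi> 0)*Im(\<phi> 1) - 2*Im(\<phi> 2)*Im(\<phi> 3)"
  unfolding bloch_def bloch_idx_def pe sum4 tensor2_def pauli_def by (simp add: algebra_simps)
lemma bl15: "bloch \<phi> 15 = 2*Re(\<phi> 0)*Im(\<phi> 1) - 2*Re(\<phi> 1)*Im(\<phi> 0) - 2*Re(\<phi> 2)*Im(\<phi> 3) + 2*Re(\<phi> 3)*Im(\<phi> 2)"
  unfolding bloch_def bloch_idx_def pe sum4 tensor2_def pauli_def by (simp add: algebra_simps)
lemma bl16: "bloch \<phi> 16 = Re(\<phi> 0)*Re(\<phi> 0) - Re(\<phi> 1)*Re(\<phi> 1) - Re(\<phi> 2)*Re(\<phi> 2) + Re(\<phi> 3)*Re(\<phi> 3) + Im(\<phi> 0)*Im(\<phi> 0) - Im(\<phi> 1)*Im(\<phi> 1) - Im(\<phi> 2)*Im(\<phi> 2) + Im(\<phi> 3)*Im(\<phi> 3)"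
  unfolding bloch_def bloch_idx_def pe sum4 tensor2_def pauli_def by (simp add: algebra_simps)
lemma sosup2: "bloch \<phi> 1 - bloch \<phi> 2 = (Re(\<phi> 0) - Re(\<phi> 2))^2 + (Im(\<phi> 0) - Im(\<phi> 2))^2 + (Re(\<phi> 1) - Re(\<phi> 3))^2 + (Im(\<phi> 1) - Im(\<phi> 3))^2"
  unfolding bl1 bl2 by algebra
lemma soslo2: "bloch \<phi> 1 + bloch \<phi> 2 = (Re(\<phi> 0) + Re(\<phi> 2))^2 + (Im(\<phi> 0) + Im(\<phi> 2))^2 + (Re(\<phi> 1) + Re(\<phi> 3))^2 + (Im(\<phi> 1) + Im(\<phi> 3))^2"
  unfolding bl1 bl2 by algebra
lemma sosup3: "bloch \<phi> 1 - bloch \<phi> 3 = (Re(\<phi> 0) - Im(\<phi> 2))^2 + (Re(\<phi> 2) + Im(\<phi> 0))^2 + (Re(\<phi> 1) - Im(\<phi> 3))^2 + (Re(\<phi> 3) + Im(\<phi> 1))^2"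
  unfolding bl1 bl3 by algebra
lemma soslo3: "bloch \<phi> 1 + bloch \<phi> 3 = (Re(\<phi> 0) + Im(\<phi> 2))^2 + (Re(\<phi> 2) - Im(\<phi> 0))^2 + (Re(\<phi> 1) + Im(\<phi> 3))^2 + (Re(\<phi> 3) - Im(\<phi> 1))^2"
  unfolding bl1 bl3 by algebra
lemma sosup4: "bloch \<phi> 1 - bloch \<phi> 4 = (Re(\<phi> 2))^2 + (Re(\<phi> 2))^2 + (Re(\<phi> 3))^2 + (Re(\<phi> 3))^2 + (Im(\<phi> 2))^2 + (Im(\<phi> 2))^2 + (Im(\<phi> 3))^2 + (Im(\<phi> 3))^2"
  unfolding bl1 bl4 by algebra
lemma soslo4: "bloch \<phi> 1 + bloch \<phi> 4 = (Re(\<phi> 0))^2 + (Re(\<phi> 0))^2 + (Re(\<phi> 1))^2 + (Re(\<phi> 1))^2 + (Im(\<phi> 0))^2 + (Im(\<phi> 0))^2 + (Im(\<phi> 1))^2 + (Im(\<phi> 1))^2"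
  unfolding bl1 bl4 by algebra
lemma sosup5: "bloch \<phi> 1 - bloch \<phi> 5 = (Re(\<phi> 0) - Re(\<phi> 1))^2 + (Im(\<phi> 0) - Im(\<phi> 1))^2 + (Re(\<phi> 2) - Re(\<phi> 3))^2 + (Im(\<phi> 2) - Im(\<phi> 3))^2"
  unfolding bl1 bl5 by algebra
lemma soslo5: "bloch \<phi> 1 + bloch \<phi> 5 = (Re(\<phi> 0) + Re(\<phi> 1))^2 + (Im(\<phi> 0) + Im(\<phi> 1))^2 + (Re(\<phi> 2) + Re(\<phi> 3))^2 + (Im(\<phi> 2) + Im(\<phi> 3))^2"
  unfolding bl1 bl5 by algebra
lemma sosup6: "bloch \<phi> 1 - bloch \<phi> 6 = (Re(\<phi> 0) - Im(\<phi> 1))^2 + (Re(\<phi> 1) + Im(\<phi> 0))^2 + (Re(\<phi> 2) - Im(\<phi> 3))^2 + (Re(\<phi> 3) + Im(\<phi> 2))^2"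
  unfolding bl1 bl6 by algebra
lemma soslo6: "bloch \<phi> 1 + bloch \<phi> 6 = (Re(\<phi> 0) + Im(\<phi> 1))^2 + (Re(\<phi> 1) - Im(\<phi> 0))^2 + (Re(\<phi> 2) + Im(\<phi> 3))^2 + (Re(\<phi> 3) - Im(\<phi> 2))^2"
  unfolding bl1 bl6 by algebra
lemma sosup7: "bloch \<phi> 1 - bloch \<phi> 7 = (Re(\<phi> 1))^2 + (Re(\<phi> 1))^2 + (Re(\<phi> 3))^2 + (Re(\<phi> 3))^2 + (Im(\<phi> 1))^2 + (Im(\<phi> 1))^2 + (Im(\<phi> 3))^2 + (Im(\<phi> 3))^2"
  unfolding bl1 bl7 by algebra
lemma soslo7: "bloch \<phi> 1 + bloch \<phi> 7 = (Re(\<phi> 0))^2 + (Re(\<phi> 0))^2 + (Re(\<phi> 2))^2 + (Re(\<phi> 2))^2 + (Im(\<phi> 0))^2 + (Im(\<phi> 0))^2 + (Im(\<phi> 2))^2 + (Im(\<phi> 2))^2"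
  unfolding bl1 bl7 by algebra
lemma sosup8: "bloch \<phi> 1 - bloch \<phi> 8 = (Re(\<phi> 0) - Re(\<phi> 3))^2 + (Im(\<phi> 0) - Im(\<phi> 3))^2 + (Re(\<phi> 1) - Re(\<phi> 2))^2 + (Im(\<phi> 1) - Im(\<phi> 2))^2"
  unfolding bl1 bl8 by algebra
lemma soslo8: "bloch \<phi> 1 + bloch \<phi> 8 = (Re(\<phi> 0) + Re(\<phi> 3))^2 + (Im(\<phi> 0) + Im(\<phi> 3))^2 + (Re(\<phi> 1) + Re(\<phi> 2))^2 + (Im(\<phi> 1) + Im(\<phi> 2))^2"
  unfolding bl1 bl8 by algebra
lemma sosup9: "bloch \<phi> 1 - bloch \<phi> 9 = (Re(\<phi> 0) - Im(\<phi> 3))^2 + (Re(\<phi> 3) + Im(\<phi> 0))^2 + (Re(\<phi> 1) + Im(\<phi> 2))^2 + (Re(\<phi> 2) - Im(\<phi> 1))^2"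
  unfolding bl1 bl9 by algebra
lemma soslo9: "bloch \<phi> 1 + bloch \<phi> 9 = (Re(\<phi> 0) + Im(\<phi> 3))^2 + (Re(\<phi> 3) - Im(\<phi> 0))^2 + (Re(\<phi> 1) - Im(\<phi> 2))^2 + (Re(\<phi> 2) + Im(\<phi> 1))^2"
  unfolding bl1 bl9 by algebra
lemma sosup10: "bloch \<phi> 1 - bloch \<phi> 10 = (Re(\<phi> 0) - Re(\<phi> 2))^2 + (Im(\<phi> 0) - Im(\<phi> 2))^2 + (Re(\<phi> 1) + Re(\<phi> 3))^2 + (Im(\<phi> 1) + Im(\<phi> 3))^2"
  unfolding bl1 bl10 by algebra
lemma soslo10: "bloch \<phi> 1 + bloch \<phi> 10 = (Re(\<phi> 0) + Re(\<phi> 2))^2 + (Im(\<phi> 0) + Im(\<phi> 2))^2 + (Re(\<phi> 1) - Re(\<phi> 3))^2 + (Im(\<phi> 1) - Im(\<phi> 3))^2"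
  unfolding bl1 bl10 by algebra
lemma sosup11: "bloch \<phi> 1 - bloch \<phi> 11 = (Re(\<phi> 0) - Im(\<phi> 3))^2 + (Re(\<phi> 3) + Im(\<phi> 0))^2 + (Re(\<phi> 1) - Im(\<phi> 2))^2 + (Re(\<phi> 2) + Im(\<phi> 1))^2"
  unfolding bl1 bl11 by algebra
lemma soslo11: "bloch \<phi> 1 + bloch \<phi> 11 = (Re(\<phi> 0) + Im(\<phi> 3))^2 + (Re(\<phi> 3) - Im(\<phi> 0))^2 + (Re(\<phi> 1) + Im(\<phi> 2))^2 + (Re(\<phi> 2) - Im(\<phi> 1))^2"
  unfolding bl1 bl11 by algebra
lemma sosup12: "bloch \<phi> 1 - bloch \<phi> 12 = (Re(\<phi> 0) + Re(\<phi> 3))^2 + (Im(\<phi> 0) + Im(\<phi> 3))^2 + (Re(\<phi> 1) - Re(\<phi> 2))^2 + (Im(\<phi> 1) - Im(\<phi> 2))^2"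
  unfolding bl1 bl12 by algebra
lemma soslo12: "bloch \<phi> 1 + bloch \<phi> 12 = (Re(\<phi> 0) - Re(\<phi> 3))^2 + (Im(\<phi> 0) - Im(\<phi> 3))^2 + (Re(\<phi> 1) + Re(\<phi> 2))^2 + (Im(\<phi> 1) + Im(\<phi> 2))^2"
  unfolding bl1 bl12 by algebra
lemma sosup13: "bloch \<phi> 1 - bloch \<phi> 13 = (Re(\<phi> 0) - Im(\<phi> 2))^2 + (Re(\<phi> 2) + Im(\<phi> 0))^2 + (Re(\<phi> 1) + Im(\<phi> 3))^2 + (Re(\<phi> 3) - Im(\<phi> 1))^2"
  unfolding bl1 bl13 by algebra
lemma soslo13: "bloch \<phi> 1 + bloch \<phi> 13 = (Re(\<phi> 0) + Im(\<phi> 2))^2 + (Re(\<phi> 2) - Im(\<phi> 0))^2 + (Re(\<phi> 1) - Im(\<phi> 3))^2 + (Re(\<phi> 3) + Im(\<phi> 1))^2"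
  unfolding bl1 bl13 by algebra
lemma sosup14: "bloch \<phi> 1 - bloch \<phi> 14 = (Re(\<phi> 0) - Re(\<phi> 1))^2 + (Im(\<phi> 0) - Im(\<phi> 1))^2 + (Re(\<phi> 2) + Re(\<phi> 3))^2 + (Im(\<phi> 2) + Im(\<phi> 3))^2"
  unfolding bl1 bl14 by algebra
lemma soslo14: "bloch \<phi> 1 + bloch \<phi> 14 = (Re(\<phi> 0) + Re(\<phi> 1))^2 + (Im(\<phi> 0) + Im(\<phi> 1))^2 + (Re(\<phi> 2) - Re(\<phi> 3))^2 + (Im(\<phi> 2) - Im(\<phi> 3))^2"
  unfolding bl1 bl14 by algebra
lemma sosup15: "bloch \<phi> 1 - bloch \<phi> 15 = (Re(\<phi> 0) - Im(\<phi> 1))^2 + (Re(\<phi> 1) + Im(\<phi> 0))^2 + (Re(\<phi> 2) + Im(\<phi> 3))^2 + (Re(\<phi> 3) - Im(\<phi> 2))^2"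
  unfolding bl1 bl15 by algebra
lemma soslo15: "bloch \<phi> 1 + bloch \<phi> 15 = (Re(\<phi> 0) + Im(\<phi> 1))^2 + (Re(\<phi> 1) - Im(\<phi> 0))^2 + (Re(\<phi> 2) - Im(\<phi> 3))^2 + (Re(\<phi> 3) + Im(\<phi> 2))^2"
  unfolding bl1 bl15 by algebra
lemma sosup16: "bloch \<phi> 1 - bloch \<phi> 16 = (Re(\<phi> 1))^2 + (Re(\<phi> 1))^2 + (Re(\<phi> 2))^2 + (Re(\<phi> 2))^2 + (Im(\<phi> 1))^2 + (Im(\<phi> 1))^2 + (Im(\<phi> 2))^2 + (Im(\<phi> 2))^2"
  unfolding bl1 bl16 by algebra
lemma soslo16: "bloch \<phi> 1 + bloch \<phi> 16 = (Re(\<phi> 0))^2 + (Re(\<phi> 0))^2 + (Re(\<phi> 3))^2 + (Re(\<phi> 3))^2 + (Im(\<phi> 0))^2 + (Im(\<phi> 0))^2 + (Im(\<phi> 3))^2 + (Im(\<phi> 3))^2"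
  unfolding bl1 bl16 by algebra
lemma idI5: "let C = (\<lambda>i. bloch \<phi> i) in
  C 8 * (C 12 * C 16 - C 13 * C 15) - C 9 * (C 11 * C 16 - C 13 * C 14) + C 10 * (C 11 * C 15 - C 12 * C 14)
  = - (C 1 ^ 2 - (C 2^2 + C 3^2 + C 4^2)) * C 1"
  unfolding Let_def bl1 bl2 bl3 bl4 bl8 bl9 bl10 bl11 bl12 bl13 bl14 bl15 bl16 by algebra

definition Tm :: "real \<Rightarrow> real \<Rightarrow> real \<Rightarrow> (nat \<Rightarrow> complex) \<Rightarrow> nat \<Rightarrow> complex" where
  "Tm n1 n2 n3 \<phi> r =
    (if r = 0 then Complex (n3*Re(\<phi> 0) + n1*Re(\<phi> 2) + n2*Im(\<phi> 2)) (n3*Im(\<phi> 0) + n1*Im(\<phi> 2) - n2*Re(\<phi> 2))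
     else if r = 1 then Complex (n3*Re(\<phi> 1) + n1*Re(\<phi> 3) + n2*Im(\<phi> 3)) (n3*Im(\<phi> 1) + n1*Im(\<phi> 3) - n2*Re(\<phi> 3))
     else if r = 2 then Complex (n1*Re(\<phi> 0) - n2*Im(\<phi> 0) - n3*Re(\<phi> 2)) (n1*Im(\<phi> 0) + n2*Re(\<phi> 0) - n3*Im(\<phi> 2))
     else Complex (n1*Re(\<phi> 1) - n2*Im(\<phi> 1) - n3*Re(\<phi> 3)) (n1*Im(\<phi> 1) + n2*Re(\<phi> 1) - n3*Im(\<phi> 3)))"
lemma idI1: "bloch \<phi> 2^2 + bloch \<phi> 3^2 + bloch \<phi> 4^2 = bloch \<phi> 5^2 + bloch \<phi> 6^2 + bloch \<phi> 7^2"
  unfolding bl2 bl3 bl4 bl5 bl6 bl7 by algebra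
lemma idI2_1: "bloch \<phi> 8 * bloch \<phi> 2 + bloch \<phi> 11 * bloch \<phi> 3 + bloch \<phi> 14 * bloch \<phi> 4 = bloch \<phi> 5 * bloch \<phi> 1"
  unfolding bl1 bl2 bl3 bl4 bl5 bl8 bl11 bl14 by algebra
lemma idI2_2: "bloch \<phi> 9 * bloch \<phi> 2 + bloch \<phi> 12 * bloch \<phi> 3 + bloch \<phi> 15 * bloch \<phi> 4 = bloch \<phi> 6 * bloch \<phi> 1"
  unfolding bl1 bl2 bl3 bl4 bl6 bl9 bl12 bl15 by algebra
lemma idI2_3: "bloch \<phi> 10 * bloch \<phi> 2 + bloch \<phi> 13 * bloch \<phi> 3 + bloch \<phi> 16 * bloch \<phi> 4 = bloch \<phi> 7 * bloch \<phi> 1"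
  unfolding bl1 bl2 bl3 bl4 bl7 bl10 bl13 bl16 by algebra
lemma idI3_1: "bloch \<phi> 8 * bloch \<phi> 5 + bloch \<phi> 9 * bloch \<phi> 6 + bloch \<phi> 10 * bloch \<phi> 7 = bloch \<phi> 2 * bloch \<phi> 1"
  unfolding bl1 bl2 bl5 bl6 bl7 bl8 bl9 bl10 by algebra
lemma idI3_2: "bloch \<phi> 11 * bloch \<phi> 5 + bloch \<phi> 12 * bloch \<phi> 6 + bloch \<phi> 13 * bloch \<phi> 7 = bloch \<phi> 3 * bloch \<phi> 1"
  unfolding bl1 bl3 bl5 bl6 bl7 bl11 bl12 bl13 by algebra
lemma idI3_3: "bloch \<phi> 14 * bloch \<phi> 5 + bloch \<phi> 15 * bloch \<phi> 6 + bloch \<phi> 16 * bloch \<phi> 7 = bloch \<phi> 4 * bloch \<phi> 1"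
  unfolding bl1 bl4 bl5 bl6 bl7 bl14 bl15 bl16 by algebra
lemma idI4_11: "bloch \<phi> 8 * bloch \<phi> 8 + bloch \<phi> 9 * bloch \<phi> 9 + bloch \<phi> 10 * bloch \<phi> 10 = (bloch \<phi> 1^2 - (bloch \<phi> 2^2 + bloch \<phi> 3^2 + bloch \<phi> 4^2)) + bloch \<phi> 2 * bloch \<phi> 2"
  unfolding bl1 bl2 bl3 bl4 bl8 bl9 bl10 by algebra
lemma idI4_12: "bloch \<phi> 8 * bloch \<phi> 11 + bloch \<phi> 9 * bloch \<phi> 12 + bloch \<phi> 10 * bloch \<phi> 13 = bloch \<phi> 2 * bloch \<phi> 3"
  unfolding bl1 bl2 bl3 bl4 bl8 bl9 bl10 bl11 bl12 bl13 by algebra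
lemma idI4_13: "bloch \<phi> 8 * bloch \<phi> 14 + bloch \<phi> 9 * bloch \<phi> 15 + bloch \<phi> 10 * bloch \<phi> 16 = bloch \<phi> 2 * bloch \<phi> 4"
  unfolding bl1 bl2 bl3 bl4 bl8 bl9 bl10 bl14 bl15 bl16 by algebra
lemma idI4_21: "bloch \<phi> 11 * bloch \<phi> 8 + bloch \<phi> 12 * bloch \<phi> 9 + bloch \<phi> 13 * bloch \<phi> 10 = bloch \<phi> 3 * bloch \<phi> 2"
  unfolding bl1 bl2 bl3 bl4 bl8 bl9 bl10 bl11 bl12 bl13 by algebra
lemma idI4_22: "bloch \<phi> 11 * bloch \<phi> 11 + bloch \<phi> 12 * bloch \<phi> 12 + bloch \<phi> 13 * bloch \<phi> 13 = (bloch \<phi> 1^2 - (bloch \<phi> 2^2 + bloch \<phi> 3^2 + bloch \<phi> 4^2)) + bloch \<phi> 3 * bloch \<phi> 3"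
  unfolding bl1 bl2 bl3 bl4 bl11 bl12 bl13 by algebra
lemma idI4_23: "bloch \<phi> 11 * bloch \<phi> 14 + bloch \<phi> 12 * bloch \<phi> 15 + bloch \<phi> 13 * bloch \<phi> 16 = bloch \<phi> 3 * bloch \<phi> 4"
  unfolding bl1 bl2 bl3 bl4 bl11 bl12 bl13 bl14 bl15 bl16 by algebra
lemma idI4_31: "bloch \<phi> 14 * bloch \<phi> 8 + bloch \<phi> 15 * bloch \<phi> 9 + bloch \<phi> 16 * bloch \<phi> 10 = bloch \<phi> 4 * bloch \<phi> 2"
  unfolding bl1 bl2 bl3 bl4 bl8 bl9 bl10 bl14 bl15 bl16 by algebra
lemma idI4_32: "bloch \<phi> 14 * bloch \<phi> 11 + bloch \<phi> 15 * bloch \<phi> 12 + bloch \<phi> 16 * bloch \<phi> 13 = bloch \<phi> 4 * bloch \<phi> 3"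
  unfolding bl1 bl2 bl3 bl4 bl11 bl12 bl13 bl14 bl15 bl16 by algebra
lemma idI4_33: "bloch \<phi> 14 * bloch \<phi> 14 + bloch \<phi> 15 * bloch \<phi> 15 + bloch \<phi> 16 * bloch \<phi> 16 = (bloch \<phi> 1^2 - (bloch \<phi> 2^2 + bloch \<phi> 3^2 + bloch \<phi> 4^2)) + bloch \<phi> 4 * bloch \<phi> 4"
  unfolding bl1 bl2 bl3 bl4 bl14 bl15 bl16 by algebra
lemma T1: "bloch (Tm n1 n2 n3 \<phi>) 1 = (n1^2 + n2^2 + n3^2) * bloch \<phi> 1"
  unfolding bl1 bl2 bl3 bl4 bl5 bl6 bl7 bl8 bl9 bl10 bl11 bl12 bl13 bl14 bl15 bl16 by (simp add: Tm_def; algebra)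
lemma Ta1: "bloch (Tm n1 n2 n3 \<phi>) 2 = 2 * n1 * (n1 * bloch \<phi> 2 + n2 * bloch \<phi> 3 + n3 * bloch \<phi> 4) - (n1^2 + n2^2 + n3^2) * bloch \<phi> 2"
  unfolding bl1 bl2 bl3 bl4 bl5 bl6 bl7 bl8 bl9 bl10 bl11 bl12 bl13 bl14 bl15 bl16 by (simp add: Tm_def; algebra)
lemma Ta2: "bloch (Tm n1 n2 n3 \<phi>) 3 = 2 * n2 * (n1 * bloch \<phi> 2 + n2 * bloch \<phi> 3 + n3 * bloch \<phi> 4) - (n1^2 + n2^2 + n3^2) * bloch \<phi> 3"
  unfolding bl1 bl2 bl3 bl4 bl5 bl6 bl7 bl8 bl9 bl10 bl11 bl12 bl13 bl14 bl15 bl16 by (simp add: Tm_def; algebra)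
lemma Ta3: "bloch (Tm n1 n2 n3 \<phi>) 4 = 2 * n3 * (n1 * bloch \<phi> 2 + n2 * bloch \<phi> 3 + n3 * bloch \<phi> 4) - (n1^2 + n2^2 + n3^2) * bloch \<phi> 4"
  unfolding bl1 bl2 bl3 bl4 bl5 bl6 bl7 bl8 bl9 bl10 bl11 bl12 bl13 bl14 bl15 bl16 by (simp add: Tm_def; algebra)
lemma Tb1: "bloch (Tm n1 n2 n3 \<phi>) 5 = (n1^2 + n2^2 + n3^2) * bloch \<phi> 5"
  unfolding bl1 bl2 bl3 bl4 bl5 bl6 bl7 bl8 bl9 bl10 bl11 bl12 bl13 bl14 bl15 bl16 by (simp add: Tm_def; algebra)
lemma Tb2: "bloch (Tm n1 n2 n3 \<phi>) 6 = (n1^2 + n2^2 + n3^2) * bloch \<phi> 6"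
  unfolding bl1 bl2 bl3 bl4 bl5 bl6 bl7 bl8 bl9 bl10 bl11 bl12 bl13 bl14 bl15 bl16 by (simp add: Tm_def; algebra)
lemma Tb3: "bloch (Tm n1 n2 n3 \<phi>) 7 = (n1^2 + n2^2 + n3^2) * bloch \<phi> 7"
  unfolding bl1 bl2 bl3 bl4 bl5 bl6 bl7 bl8 bl9 bl10 bl11 bl12 bl13 bl14 bl15 bl16 by (simp add: Tm_def; algebra)
lemma Tc11: "bloch (Tm n1 n2 n3 \<phi>) 8 = 2 * n1 * (n1 * bloch \<phi> 8 + n2 * bloch \<phi> 11 + n3 * bloch \<phi> 14) - (n1^2 + n2^2 + n3^2) * bloch \<phi> 8"
  unfolding bl1 bl2 bl3 bl4 bl5 bl6 bl7 bl8 bl9 bl10 bl11 bl12 bl13 bl14 bl15 bl16 by (simp add: Tm_def; algebra)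
lemma Tc12: "bloch (Tm n1 n2 n3 \<phi>) 9 = 2 * n1 * (n1 * bloch \<phi> 9 + n2 * bloch \<phi> 12 + n3 * bloch \<phi> 15) - (n1^2 + n2^2 + n3^2) * bloch \<phi> 9"
  unfolding bl1 bl2 bl3 bl4 bl5 bl6 bl7 bl8 bl9 bl10 bl11 bl12 bl13 bl14 bl15 bl16 by (simp add: Tm_def; algebra)
lemma Tc13: "bloch (Tm n1 n2 n3 \<phi>) 10 = 2 * n1 * (n1 * bloch \<phi> 10 + n2 * bloch \<phi> 13 + n3 * bloch \<phi> 16) - (n1^2 + n2^2 + n3^2) * bloch \<phi> 10"
  unfolding bl1 bl2 bl3 bl4 bl5 bl6 bl7 bl8 bl9 bl10 bl11 bl12 bl13 bl14 bl15 bl16 by (simp add: Tm_def; algebra)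
lemma Tc21: "bloch (Tm n1 n2 n3 \<phi>) 11 = 2 * n2 * (n1 * bloch \<phi> 8 + n2 * bloch \<phi> 11 + n3 * bloch \<phi> 14) - (n1^2 + n2^2 + n3^2) * bloch \<phi> 11"
  unfolding bl1 bl2 bl3 bl4 bl5 bl6 bl7 bl8 bl9 bl10 bl11 bl12 bl13 bl14 bl15 bl16 by (simp add: Tm_def; algebra)
lemma Tc22: "bloch (Tm n1 n2 n3 \<phi>) 12 = 2 * n2 * (n1 * bloch \<phi> 9 + n2 * bloch \<phi> 12 + n3 * bloch \<phi> 15) - (n1^2 + n2^2 + n3^2) * bloch \<phi> 12"
  unfolding bl1 bl2 bl3 bl4 bl5 bl6 bl7 bl8 bl9 bl10 bl11 bl12 bl13 bl14 bl15 bl16 by (simp add: Tm_def; algebra)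
lemma Tc23: "bloch (Tm n1 n2 n3 \<phi>) 13 = 2 * n2 * (n1 * bloch \<phi> 10 + n2 * bloch \<phi> 13 + n3 * bloch \<phi> 16) - (n1^2 + n2^2 + n3^2) * bloch \<phi> 13"
  unfolding bl1 bl2 bl3 bl4 bl5 bl6 bl7 bl8 bl9 bl10 bl11 bl12 bl13 bl14 bl15 bl16 by (simp add: Tm_def; algebra)
lemma Tc31: "bloch (Tm n1 n2 n3 \<phi>) 14 = 2 * n3 * (n1 * bloch \<phi> 8 + n2 * bloch \<phi> 11 + n3 * bloch \<phi> 14) - (n1^2 + n2^2 + n3^2) * bloch \<phi> 14"
  unfolding bl1 bl2 bl3 bl4 bl5 bl6 bl7 bl8 bl9 bl10 bl11 bl12 bl13 bl14 bl15 bl16 by (simp add: Tm_def; algebra)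
lemma Tc32: "bloch (Tm n1 n2 n3 \<phi>) 15 = 2 * n3 * (n1 * bloch \<phi> 9 + n2 * bloch \<phi> 12 + n3 * bloch \<phi> 15) - (n1^2 + n2^2 + n3^2) * bloch \<phi> 15"
  unfolding bl1 bl2 bl3 bl4 bl5 bl6 bl7 bl8 bl9 bl10 bl11 bl12 bl13 bl14 bl15 bl16 by (simp add: Tm_def; algebra)
lemma Tc33: "bloch (Tm n1 n2 n3 \<phi>) 16 = 2 * n3 * (n1 * bloch \<phi> 10 + n2 * bloch \<phi> 13 + n3 * bloch \<phi> 16) - (n1^2 + n2^2 + n3^2) * bloch \<phi> 16"
  unfolding bl1 bl2 bl3 bl4 bl5 bl6 bl7 bl8 bl9 bl10 bl11 bl12 bl13 bl14 bl15 bl16 by (simp add: Tm_def; algebra)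
lemma nnup2: "0 \<le> bloch \<phi> 1 - bloch \<phi> 2" unfolding sosup2 by (intro add_nonneg_nonneg zero_le_power2)
lemma nnlo2: "0 \<le> bloch \<phi> 1 + bloch \<phi> 2" unfolding soslo2 by (intro add_nonneg_nonneg zero_le_power2)
lemma nnup3: "0 \<le> bloch \<phi> 1 - bloch \<phi> 3" unfolding sosup3 by (intro add_nonneg_nonneg zero_le_power2)
lemma nnlo3: "0 \<le> bloch \<phi> 1 + bloch \<phi> 3" unfolding soslo3 by (intro add_nonneg_nonneg zero_le_power2)
lemma nnup4: "0 \<le> bloch \<phi> 1 - bloch \<phi> 4" unfolding sosup4 by (intro add_nonneg_nonneg zero_le_power2)
lemma nnlo4: "0 \<le> bloch \<phi> 1 + bloch \<phi> 4" unfolding soslo4 by (intro add_nonneg_nonneg zero_le_power2)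
lemma nnup5: "0 \<le> bloch \<phi> 1 - bloch \<phi> 5" unfolding sosup5 by (intro add_nonneg_nonneg zero_le_power2)
lemma nnlo5: "0 \<le> bloch \<phi> 1 + bloch \<phi> 5" unfolding soslo5 by (intro add_nonneg_nonneg zero_le_power2)
lemma nnup6: "0 \<le> bloch \<phi> 1 - bloch \<phi> 6" unfolding sosup6 by (intro add_nonneg_nonneg zero_le_power2)
lemma nnlo6: "0 \<le> bloch \<phi> 1 + bloch \<phi> 6" unfolding soslo6 by (intro add_nonneg_nonneg zero_le_power2)
lemma nnup7: "0 \<le> bloch \<phi> 1 - bloch \<phi> 7" unfolding sosup7 by (intro add_nonneg_nonneg zero_le_power2)
lemma nnlo7: "0 \<le> bloch \<phi> 1 + bloch \<phi> 7" unfolding soslo7 by (intro add_nonneg_nonneg zero_le_power2)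
lemma nnup8: "0 \<le> bloch \<phi> 1 - bloch \<phi> 8" unfolding sosup8 by (intro add_nonneg_nonneg zero_le_power2)
lemma nnlo8: "0 \<le> bloch \<phi> 1 + bloch \<phi> 8" unfolding soslo8 by (intro add_nonneg_nonneg zero_le_power2)
lemma nnup9: "0 \<le> bloch \<phi> 1 - bloch \<phi> 9" unfolding sosup9 by (intro add_nonneg_nonneg zero_le_power2)
lemma nnlo9: "0 \<le> bloch \<phi> 1 + bloch \<phi> 9" unfolding soslo9 by (intro add_nonneg_nonneg zero_le_power2)
lemma nnup10: "0 \<le> bloch \<phi> 1 - bloch \<phi> 10" unfolding sosup10 by (intro add_nonneg_nonneg zero_le_power2)
lemma nnlo10: "0 \<le> bloch \<phi> 1 + bloch \<phi> 10" unfolding soslo10 by (intro add_nonneg_nonneg zero_le_power2)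
lemma nnup11: "0 \<le> bloch \<phi> 1 - bloch \<phi> 11" unfolding sosup11 by (intro add_nonneg_nonneg zero_le_power2)
lemma nnlo11: "0 \<le> bloch \<phi> 1 + bloch \<phi> 11" unfolding soslo11 by (intro add_nonneg_nonneg zero_le_power2)
lemma nnup12: "0 \<le> bloch \<phi> 1 - bloch \<phi> 12" unfolding sosup12 by (intro add_nonneg_nonneg zero_le_power2)
lemma nnlo12: "0 \<le> bloch \<phi> 1 + bloch \<phi> 12" unfolding soslo12 by (intro add_nonneg_nonneg zero_le_power2)
lemma nnup13: "0 \<le> bloch \<phi> 1 - bloch \<phi> 13" unfolding sosup13 by (intro add_nonneg_nonneg zero_le_power2)
lemma nnlo13: "0 \<le> bloch \<phi> 1 + bloch \<phi> 13" unfolding soslo13 by (intro add_nonneg_nonneg zero_le_power2)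
lemma nnup14: "0 \<le> bloch \<phi> 1 - bloch \<phi> 14" unfolding sosup14 by (intro add_nonneg_nonneg zero_le_power2)
lemma nnlo14: "0 \<le> bloch \<phi> 1 + bloch \<phi> 14" unfolding soslo14 by (intro add_nonneg_nonneg zero_le_power2)
lemma nnup15: "0 \<le> bloch \<phi> 1 - bloch \<phi> 15" unfolding sosup15 by (intro add_nonneg_nonneg zero_le_power2)
lemma nnlo15: "0 \<le> bloch \<phi> 1 + bloch \<phi> 15" unfolding soslo15 by (intro add_nonneg_nonneg zero_le_power2)
lemma nnup16: "0 \<le> bloch \<phi> 1 - bloch \<phi> 16" unfolding sosup16 by (intro add_nonneg_nonneg zero_le_power2)
lemma nnlo16: "0 \<le> bloch \<phi> 1 + bloch \<phi> 16" unfolding soslo16 by (intro add_nonneg_nonneg zero_le_power2)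

lemma pure_iff: "pure_state \<phi> \<longleftrightarrow> bloch \<phi> 1 = 1"
  unfolding pure_state_def sum4 cmod_power2 bl1 by (simp add: power2_eq_square add_ac)

lemma cases16: "2 \<le> i \<Longrightarrow> i \<le> (16::nat) \<Longrightarrow> i = 2 \<or> i = 3 \<or> i = 4 \<or> i = 5 \<or> i = 6 \<or> i = 7 \<or> i = 8 \<or> i = 9 \<or> i = 10 \<or> i = 11 \<or> i = 12 \<or> i = 13 \<or> i = 14 \<or> i = 15 \<or> i = 16"
  by presburger

lemma bnd: assumes "pure_state \<phi>" "2 \<le> i" "i \<le> 16" shows "\<bar>bloch \<phi> i\<bar> \<le> 1"
proof -
  have 1: "bloch \<phi> 1 = 1" using assms pure_iff by auto
  have h: "\<And>x. 0 \<le> bloch \<phi> 1 - x \<Longrightarrow> 0 \<le> bloch \<phi> 1 + x \<Longrightarrow> \<bar>x\<bar> \<le> 1" using 1 by arith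
  have all: "\<bar>bloch \<phi> 2\<bar> \<le> 1 \<and> \<bar>bloch \<phi> 3\<bar> \<le> 1 \<and> \<bar>bloch \<phi> 4\<bar> \<le> 1 \<and> \<bar>bloch \<phi> 5\<bar> \<le> 1 \<and> \<bar>bloch \<phi> 6\<bar> \<le> 1 \<and> \<bar>bloch \<phi> 7\<bar> \<le> 1 \<and> \<bar>bloch \<phi> 8\<bar> \<le> 1 \<and> \<bar>bloch \<phi> 9\<bar> \<le> 1 \<and> \<bar>bloch \<phi> 10\<bar> \<le> 1 \<and> \<bar>bloch \<phi> 11\<bar> \<le> 1 \<and> \<bar>bloch \<phi> 12\<bar> \<le> 1 \<and> \<bar>bloch \<phi> 13\<bar> \<le> 1 \<and> \<bar>bloch \<phi> 14\<bar> \<le> 1 \<and> \<bar>bloch \<phi> 15\<bar> \<le> 1 \<and> \<bar>bloch \<phi> 16\<bar> \<le> 1"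
    by (intro conjI; rule h; rule nnup2 nnup3 nnup4 nnup5 nnup6 nnup7 nnup8 nnup9 nnup10 nnup11 nnup12 nnup13 nnup14 nnup15 nnup16 nnlo2 nnlo3 nnlo4 nnlo5 nnlo6 nnlo7 nnlo8 nnlo9 nnlo10 nnlo11 nnlo12 nnlo13 nnlo14 nnlo15 nnlo16)
  from cases16[OF assms(2,3)] all show ?thesis by auto
qed

lemma sqdiv: "(x::real) \<noteq> 0 \<Longrightarrow> x^2 / x = x" by (simp add: power2_eq_square)

lemma D_self: "D_chi2 b b = 0"
proof (cases "b = 1 \<or> b = -1")
  case True then show ?thesis by (auto simp: D_chi2_def)
next
  case False
  then have "b + 1 \<noteq> 0" "1 - b \<noteq> 0" by auto
  then have e1: "((b+1)/2)^2/((b+1)/2) = (b+1)/2" and e2: "((1-b)/2)^2/((1-b)/2) = (1-b)/2"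
    by (intro sqdiv; simp)+
  show ?thesis using False unfolding D_chi2_def e1 e2 by (simp add: field_simps)
qed

lemma D_form: assumes "\<bar>h\<bar> < 1" shows "D_chi2 b h = (b - h)^2 / (1 - h^2)"
proof -
  have h2: "h^2 < 1" using assms by (simp add: abs_square_less_1)
  have "h + 1 \<noteq> 0" "1 - h \<noteq> 0" "1 - h^2 \<noteq> 0" "\<not>((h = 1 \<or> h = -1) \<and> b = h)" using assms h2
    by (auto simp: abs_less_iff)
  then show ?thesis by (simp add: D_chi2_def power2_eq_square field_simps)
qed

lemma hsym:
  fixes S :: "real set"
  assumes y: "y \<in> S" and b: "\<And>x. x \<in> S \<Longrightarrow> \<bar>x\<bar> \<le> 1" and r: "\<And>x. x \<in> S \<Longrightarrow> 2*c - x \<in> S"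
  shows "(Sup S + Inf S)/2 = c"
proof -
  have ne: "S \<noteq> {}" using y by auto
  have ba: "bdd_above S" using b by (auto intro!: bdd_aboveI[of _ 1] simp: abs_le_iff)
  have "Inf S = 2*c - Sup S"
  proof (rule cInf_eq_non_empty)
    show "S \<noteq> {}" by fact
  next
    fix x assume "x \<in> S"
    then have "2*c - x \<le> Sup S" using r cSup_upper ba by blast
    then show "2*c - Sup S \<le> x" by linarith
  next
    fix z assume z: "\<And>x. x \<in> S \<Longrightarrow> z \<le> x"
    have "Sup S \<le> 2*c - z"
    proof (rule cSup_least[OF ne])
      fix x assume "x \<in> S"
      then have "z \<le> 2*c - x" using z r by blast
      then show "x \<le> 2*c - z" by linarith
    qed
    then show "z \<le> 2*c - Sup S" by linarith
  qed
  then show ?thesis by simp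
qed

lemma one_set:
  fixes S :: "real set"
  assumes "y \<in> S" "S \<subseteq> {y}" shows "D_chi2 y ((Sup S + Inf S)/2) = 0"
proof -
  have "S = {y}" using assms by auto
  then show ?thesis by (simp add: D_self)
qed

lemma two_set:
  fixes S :: "real set"
  assumes "y \<in> S" "S \<subseteq> {y, v}" "\<bar>(y + v)/2\<bar> < 1"
  shows "D_chi2 y ((Sup S + Inf S)/2) \<le> ((y - v)/2)^2 / (1 - ((y + v)/2)^2)"
proof -
  have den: "0 < 1 - ((y + v)/2)^2" using assms(3) by (simp add: abs_square_less_1)
  show ?thesis
  proof (cases "v \<in> S \<and> v \<noteq> y")
    case True
    then have S: "S = {y, v}" using assms by auto
    have "Sup S = max y v" unfolding S by (simp add: cSup_insert sup_max)
    moreover have "Inf S = min y v" unfolding S by (simp add: cInf_insert inf_min)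
    ultimately have "(Sup S + Inf S)/2 = (y + v)/2" by (simp add: max_def min_def)
    then have h: "(Sup S + Inf S)/2 = (y + v)/2" .
    have e: "y - (y+v)/2 = (y-v)/2" by (simp add: field_simps)
    show ?thesis unfolding h D_form[OF assms(3)] e by simp
  next
    case False
    then have "S \<subseteq> {y}" using assms by auto
    then have "D_chi2 y ((Sup S + Inf S)/2) = 0" using one_set assms(1) by blast
    then show ?thesis using den by simp
  qed
qed

lemma cv_mem: "pure_state \<psi> \<Longrightarrow> bloch \<psi> i \<in> cond_vals (bloch \<psi>) i"
  unfolding cond_vals_def by auto

lemma cv_E: assumes "x \<in> cond_vals (bloch \<psi>) i"
  obtains \<phi> where "pure_state \<phi>" "\<And>j. 1 \<le> j \<Longrightarrow> j < i \<Longrightarrow> bloch \<phi> j = bloch \<psi> j" "x = bloch \<phi> i"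
  using assms unfolding cond_vals_def by auto

lemma cv_I: "pure_state \<phi> \<Longrightarrow> (\<And>j. 1 \<le> j \<Longrightarrow> j < i \<Longrightarrow> bloch \<phi> j = bloch \<psi> j) \<Longrightarrow> bloch \<phi> i \<in> cond_vals (bloch \<psi>) i"
  unfolding cond_vals_def by auto

lemma sym_step:
  assumes "pure_state \<psi>" "2 \<le> i" "i \<le> 16"
  and M: "\<And>\<phi>. pure_state \<phi> \<Longrightarrow> (\<And>j. 1 \<le> j \<Longrightarrow> j < i \<Longrightarrow> bloch \<phi> j = bloch \<psi> j) \<Longrightarrow>
      pure_state (M \<phi>) \<and> (\<forall>j. 1 \<le> j \<longrightarrow> j < i \<longrightarrow> bloch (M \<phi>) j = bloch \<psi> j) \<and> bloch (M \<phi>) i = 2*c - bloch \<phi> i"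
  shows "h_mid (bloch \<psi>) i = c"
proof -
  let ?S = "cond_vals (bloch \<psi>) i"
  have 1: "bloch \<psi> i \<in> ?S" using assms(1) by (rule cv_mem)
  have 2: "\<bar>x\<bar> \<le> 1" if xS: "x \<in> ?S" for x
  proof -
    obtain \<phi> where "pure_state \<phi>" "\<And>j. 1 \<le> j \<Longrightarrow> j < i \<Longrightarrow> bloch \<phi> j = bloch \<psi> j" "x = bloch \<phi> i" by (rule cv_E[OF xS], blast)
    then show ?thesis using bnd assms(2,3) by auto
  qed
  have 3: "2*c - x \<in> ?S" if xS: "x \<in> ?S" for x
  proof -
    obtain \<phi> where p: "pure_state \<phi>" "\<And>j. 1 \<le> j \<Longrightarrow> j < i \<Longrightarrow> bloch \<phi> j = bloch \<psi> j" "x = bloch \<phi> i"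
      by (rule cv_E[OF xS], blast)
    have "pure_state (M \<phi>) \<and> (\<forall>j. 1 \<le> j \<longrightarrow> j < i \<longrightarrow> bloch (M \<phi>) j = bloch \<psi> j) \<and> bloch (M \<phi>) i = 2*c - bloch \<phi> i"
      using M[OF p(1,2)] .
    then have "bloch (M \<phi>) i \<in> ?S" by (intro cv_I) auto
    then show ?thesis using p(3) M[OF p(1,2)] by simp
  qed
  show ?thesis unfolding h_mid_def b_max_def b_min_def by (rule hsym[OF 1 2 3])
qed

lemma two_step:
  assumes "pure_state \<psi>"
  and V: "\<And>\<phi>. pure_state \<phi> \<Longrightarrow> (\<And>j. 1 \<le> j \<Longrightarrow> j < i \<Longrightarrow> bloch \<phi> j = bloch \<psi> j) \<Longrightarrow> bloch \<phi> i = bloch \<psi> i \<or> bloch \<phi> i = v"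
  and "\<bar>(bloch \<psi> i + v)/2\<bar> < 1"
  shows "D_chi2 (bloch \<psi> i) (h_mid (bloch \<psi>) i) \<le> ((bloch \<psi> i - v)/2)^2 / (1 - ((bloch \<psi> i + v)/2)^2)"
proof -
  have "cond_vals (bloch \<psi>) i \<subseteq> {bloch \<psi> i, v}"
  proof
    fix x assume "x \<in> cond_vals (bloch \<psi>) i"
    then show "x \<in> {bloch \<psi> i, v}" by (rule cv_E) (use V in auto)
  qed
  then show ?thesis unfolding h_mid_def b_max_def b_min_def
    using two_set[OF cv_mem[OF assms(1)] _ assms(3)] by blast
qed

lemma one_step:
  assumes "pure_state \<psi>"
  and V: "\<And>\<phi>. pure_state \<phi> \<Longrightarrow> (\<And>j. 1 \<le> j \<Longrightarrow> j < i \<Longrightarrow> bloch \<phi> j = bloch \<psi> j) \<Longrightarrow> bloch \<phi> i = bloch \<psi> i"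
  shows "D_chi2 (bloch \<psi> i) (h_mid (bloch \<psi>) i) = 0"
proof -
  have "cond_vals (bloch \<psi>) i \<subseteq> {bloch \<psi> i}"
  proof
    fix x assume "x \<in> cond_vals (bloch \<psi>) i"
    then show "x \<in> {bloch \<psi> i}" by (rule cv_E) (use V in auto)
  qed
  then show ?thesis unfolding h_mid_def b_max_def b_min_def
    using one_set[OF cv_mem[OF assms(1)]] by blast
qed

definition "M2 \<phi> = (\<lambda>r. if r = 2 \<or> r = 3 then - \<phi> r else \<phi> r)"
definition "M3 \<phi> = (\<lambda>r. if r = 0 then \<phi> 2 else if r = 1 then \<phi> 3 else if r = 2 then \<phi> 0 else \<phi> (1::nat))"
definition "M4 \<phi> = (\<lambda>r. cnj (M3 \<phi> r))"
definition "M5 \<phi> = (\<lambda>r. if r = 1 \<or> r = 3 then - \<phi> r else \<phi> r)"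
definition "M6 \<phi> = (\<lambda>r. if r = 0 then \<phi> 1 else if r = 1 then \<phi> 0 else if r = 2 then \<phi> 3 else \<phi> (2::nat))"

lemma M2b: "bloch (M2 \<phi>) 1 = bloch \<phi> 1" "bloch (M2 \<phi>) 2 = - bloch \<phi> 2"
  unfolding bl1 bl2 M2_def by simp_all
lemma M3b: "bloch (M3 \<phi>) 1 = bloch \<phi> 1" "bloch (M3 \<phi>) 2 = bloch \<phi> 2" "bloch (M3 \<phi>) 3 = - bloch \<phi> 3"
  unfolding bl1 bl2 bl3 M3_def by (simp_all add: algebra_simps)
lemma M4b: "bloch (M4 \<phi>) 1 = bloch \<phi> 1" "bloch (M4 \<phi>) 2 = bloch \<phi> 2" "bloch (M4 \<phi>) 3 = bloch \<phi> 3" "bloch (M4 \<phi>) 4 = - bloch \<phi> 4"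
  unfolding bl1 bl2 bl3 bl4 M4_def M3_def by (simp_all add: algebra_simps)
lemma M5b: "bloch (M5 \<phi>) 1 = bloch \<phi> 1" "bloch (M5 \<phi>) 2 = bloch \<phi> 2" "bloch (M5 \<phi>) 3 = bloch \<phi> 3" "bloch (M5 \<phi>) 4 = bloch \<phi> 4" "bloch (M5 \<phi>) 5 = - bloch \<phi> 5"
  unfolding bl1 bl2 bl3 bl4 bl5 M5_def by (simp_all add: algebra_simps)
lemma M6b: "bloch (M6 \<phi>) 1 = bloch \<phi> 1" "bloch (M6 \<phi>) 2 = bloch \<phi> 2" "bloch (M6 \<phi>) 3 = bloch \<phi> 3" "bloch (M6 \<phi>) 4 = bloch \<phi> 4" "bloch (M6 \<phi>) 5 = bloch \<phi> 5" "bloch (M6 \<phi>) 6 = - bloch \<phi> 6"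
  unfolding bl1 bl2 bl3 bl4 bl5 bl6 M6_def by (simp_all add: algebra_simps)

lemma sym_step0:
  assumes "pure_state \<psi>" "2 \<le> i" "i \<le> 16"
  and M1: "\<And>\<phi> j. 1 \<le> j \<Longrightarrow> j < i \<Longrightarrow> bloch (M \<phi>) j = bloch \<phi> j"
  and M2: "\<And>\<phi>. bloch (M \<phi>) i = - bloch \<phi> i"
  shows "h_mid (bloch \<psi>) i = 0"
proof (rule sym_step[OF assms(1-3), where M=M])
  fix \<phi> assume p: "pure_state \<phi>" and e: "\<And>j. 1 \<le> j \<Longrightarrow> j < i \<Longrightarrow> bloch \<phi> j = bloch \<psi> j"
  have "bloch (M \<phi>) 1 = bloch \<phi> 1" using M1[of 1] assms(2) by simp
  then have "pure_state (M \<phi>)" using p pure_iff by simp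
  then show "pure_state (M \<phi>) \<and> (\<forall>j. 1 \<le> j \<longrightarrow> j < i \<longrightarrow> bloch (M \<phi>) j = bloch \<psi> j) \<and> bloch (M \<phi>) i = 2*0 - bloch \<phi> i"
    using M1 M2 e by simp
qed

lemma lt_cases: "1 \<le> j \<Longrightarrow> j < (7::nat) \<Longrightarrow> j = 1 \<or> j = 2 \<or> j = 3 \<or> j = 4 \<or> j = 5 \<or> j = 6" by presburger

lemma step_ab:
  assumes "pure_state \<psi>"
  shows "D_chi2 (bloch \<psi> 2) (h_mid (bloch \<psi>) 2) = (bloch \<psi> 2)^2"
    "D_chi2 (bloch \<psi> 3) (h_mid (bloch \<psi>) 3) = (bloch \<psi> 3)^2"
    "D_chi2 (bloch \<psi> 4) (h_mid (bloch \<psi>) 4) = (bloch \<psi> 4)^2"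
    "D_chi2 (bloch \<psi> 5) (h_mid (bloch \<psi>) 5) = (bloch \<psi> 5)^2"
    "D_chi2 (bloch \<psi> 6) (h_mid (bloch \<psi>) 6) = (bloch \<psi> 6)^2"
    "D_chi2 (bloch \<psi> 7) (h_mid (bloch \<psi>) 7) \<le> (bloch \<psi> 7)^2"
proof -
  have P: "pure_state \<phi> \<Longrightarrow> bloch \<phi> 1 = 1" for \<phi> using pure_iff by auto
  have Dz: "D_chi2 b 0 = b^2" for b using D_form[of 0 b] by simp
  have "h_mid (bloch \<psi>) 2 = 0"
  proof (rule sym_step0[OF assms, where M=M2])
    fix \<phi> and j :: nat assume "1 \<le> j" "j < 2"
    then have "j = 1 \<or> j = 2 \<or> j = 3 \<or> j = 4 \<or> j = 5 \<or> j = 6" by presburger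
    then show "bloch (M2 \<phi>) j = bloch \<phi> j" using \<open>j < 2\<close> by (elim disjE) (simp_all add: M2b M2b[unfolded One_nat_def])
  qed (simp_all add: M2b)
  then show "D_chi2 (bloch \<psi> 2) (h_mid (bloch \<psi>) 2) = (bloch \<psi> 2)^2" using Dz by simp
  have "h_mid (bloch \<psi>) 3 = 0"
  proof (rule sym_step0[OF assms, where M=M3])
    fix \<phi> and j :: nat assume "1 \<le> j" "j < 3"
    then have "j = 1 \<or> j = 2 \<or> j = 3 \<or> j = 4 \<or> j = 5 \<or> j = 6" by presburger
    then show "bloch (M3 \<phi>) j = bloch \<phi> j" using \<open>j < 3\<close> by (elim disjE) (simp_all add: M3b M3b[unfolded One_nat_def])
  qed (simp_all add: M3b)
  then show "D_chi2 (bloch \<psi> 3) (h_mid (bloch \<psi>) 3) = (bloch \<psi> 3)^2" using Dz by simp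
  have "h_mid (bloch \<psi>) 4 = 0"
  proof (rule sym_step0[OF assms, where M=M4])
    fix \<phi> and j :: nat assume "1 \<le> j" "j < 4"
    then have "j = 1 \<or> j = 2 \<or> j = 3 \<or> j = 4 \<or> j = 5 \<or> j = 6" by presburger
    then show "bloch (M4 \<phi>) j = bloch \<phi> j" using \<open>j < 4\<close> by (elim disjE) (simp_all add: M4b M4b[unfolded One_nat_def])
  qed (simp_all add: M4b)
  then show "D_chi2 (bloch \<psi> 4) (h_mid (bloch \<psi>) 4) = (bloch \<psi> 4)^2" using Dz by simp
  have "h_mid (bloch \<psi>) 5 = 0"
  proof (rule sym_step0[OF assms, where M=M5])
    fix \<phi> and j :: nat assume "1 \<le> j" "j < 5"
    then have "j = 1 \<or> j = 2 \<or> j = 3 \<or> j = 4 \<or> j = 5 \<or> j = 6" by presburger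
    then show "bloch (M5 \<phi>) j = bloch \<phi> j" using \<open>j < 5\<close> by (elim disjE) (simp_all add: M5b M5b[unfolded One_nat_def])
  qed (simp_all add: M5b)
  then show "D_chi2 (bloch \<psi> 5) (h_mid (bloch \<psi>) 5) = (bloch \<psi> 5)^2" using Dz by simp
  have "h_mid (bloch \<psi>) 6 = 0"
  proof (rule sym_step0[OF assms, where M=M6])
    fix \<phi> and j :: nat assume "1 \<le> j" "j < 6"
    then have "j = 1 \<or> j = 2 \<or> j = 3 \<or> j = 4 \<or> j = 5 \<or> j = 6" by presburger
    then show "bloch (M6 \<phi>) j = bloch \<phi> j" using \<open>j < 6\<close> by (elim disjE) (simp_all add: M6b M6b[unfolded One_nat_def])
  qed (simp_all add: M6b)
  then show "D_chi2 (bloch \<psi> 6) (h_mid (bloch \<psi>) 6) = (bloch \<psi> 6)^2" using Dz by simp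
  have "D_chi2 (bloch \<psi> 7) (h_mid (bloch \<psi>) 7) \<le> ((bloch \<psi> 7 - (- bloch \<psi> 7))/2)^2 / (1 - ((bloch \<psi> 7 + (- bloch \<psi> 7))/2)^2)"
  proof (rule two_step[OF assms])
    fix \<phi> assume "pure_state \<phi>" and e: "\<And>j. 1 \<le> j \<Longrightarrow> j < 7 \<Longrightarrow> bloch \<phi> j = bloch \<psi> j"
    have "(bloch \<phi> 7)^2 = (bloch \<psi> 7)^2" using idI1[of \<phi>] idI1[of \<psi>] e[of 2] e[of 3] e[of 4] e[of 5] e[of 6] by simp
    then show "bloch \<phi> 7 = bloch \<psi> 7 \<or> bloch \<phi> 7 = - bloch \<psi> 7" by (simp add: power2_eq_iff)
  qed simp
  then show "D_chi2 (bloch \<psi> 7) (h_mid (bloch \<psi>) 7) \<le> (bloch \<psi> 7)^2" by simp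
qed


lemma circ2:
  fixes cs sn p q s :: real
  assumes "cs \<noteq> 0" "cs^2 + sn^2 = 1" "p^2 + q^2 = s^2" "p * cs + q * sn = s * cs"
  shows "(p = s \<and> q = 0) \<or> (p = s * (cs^2 - sn^2) \<and> q = 2 * s * cs * sn)"
proof -
  have "q * (q - 2 * s * cs * sn) = 0" using assms(2-4) by algebra
  then have "q = 0 \<or> q = 2 * s * cs * sn" by auto
  then show ?thesis
  proof
    assume q: "q = 0"
    then have "p * cs = s * cs" using assms(4) by simp
    then have "p = s" using assms(1) by simp
    then show ?thesis using q by simp
  next
    assume q: "q = 2 * s * cs * sn"
    then have "cs  *  p = cs  *  (s * (cs^2 - sn^2))" using assms(2,4) by algebra
    then have "p = s * (cs^2 - sn^2)" using assms(1) by simp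
    then show ?thesis using q by simp
  qed
qed

lemma sq_le_of_abs_le: "\<bar>x::real\<bar> \<le> y \<Longrightarrow> x^2 \<le> y^2"
  by (metis abs_ge_zero order_trans power2_abs power_mono)

lemma kstep_bound:
  fixes A U V s :: real
  assumes s: "0 < s" "s \<le> 1" and U: "U \<noteq> 0" and H5: "\<bar>A\<bar> + sqrt(U^2 + V^2) \<le> 1"
  shows "\<bar>A\<bar> < 1" "(A + s * U - A)^2 / (1 - A^2) \<le> s^2  *  (U / sqrt(U^2+V^2))^2"
proof -
  let ?r = "sqrt(U^2+V^2)"
  have r2: "?r^2 = U^2 + V^2" by simp
  have rpos: "0 < ?r" using U by (simp add: sum_power2_gt_zero_iff)
  then show A1: "\<bar>A\<bar> < 1" using H5 by linarith
  have "?r \<le> 1 - \<bar>A\<bar>" using H5 by linarith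
  then have "?r^2 \<le> (1 - \<bar>A\<bar>)^2" using rpos by (intro power_mono) auto
  also have "\<dots> \<le> 1 - A^2"
  proof -
    have aa: "\<bar>A\<bar> * \<bar>A\<bar> \<le> \<bar>A\<bar>" using A1 by (intro mult_right_le_one_le) auto
    have e1: "(1 - \<bar>A\<bar>)^2 = 1 - 2 * \<bar>A\<bar> + \<bar>A\<bar> * \<bar>A\<bar>" by (simp add: power2_eq_square algebra_simps)
    have e2: "A^2 = \<bar>A\<bar> * \<bar>A\<bar>" by (simp add: power2_eq_square)
    show ?thesis unfolding e1 e2 using aa by linarith
  qed
  finally have le: "?r^2 \<le> 1 - A^2" .
  have eq: "A + s * U - A = s * U" by simp
  have "(A + s * U - A)^2 / (1 - A^2) \<le> (s * U)^2 / ?r^2"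
    unfolding eq by (rule divide_left_mono) (use le rpos in auto)
  also have "\<dots> = s^2  *  (U / ?r)^2" by (simp add: power_divide power_mult_distrib)
  finally show "(A + s * U - A)^2 / (1 - A^2) \<le> s^2  *  (U / sqrt(U^2+V^2))^2" .
qed


lemma k2_bound:
  fixes A U V s cs sn :: real
  assumes s: "0 < s" "s \<le> 1" and cs: "cs^2 + sn^2 = 1"
  and H5: "\<bar>A\<bar> + sqrt(U^2 + V^2) \<le> 1"
  and ne: "A + s * U \<noteq> A + s * (cs^2 - sn^2) * U + 2 * s * cs * sn * V"
  shows "\<bar>((A + s * U) + (A + s * (cs^2 - sn^2) * U + 2 * s * cs * sn * V))/2\<bar> < 1"
   and "(((A + s * U) - (A + s * (cs^2 - sn^2) * U + 2 * s * cs * sn * V))/2)^2 /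
          (1 - (((A + s * U) + (A + s * (cs^2 - sn^2) * U + 2 * s * cs * sn * V))/2)^2) \<le> s^2 * sn^2"
proof -
  define y where "y = A + s * U"
  define v where "v = A + s * (cs^2 - sn^2) * U + 2 * s * cs * sn * V"
  define P where "P = cs * U + sn * V"
  define Q where "Q = sn * U - cs * V"
  define r where "r = sqrt(U^2 + V^2)"
  define c where "c = (y + v)/2"
  have yv: "(y - v)/2 = s * sn * Q" unfolding y_def v_def Q_def using cs by algebra
  have cc: "c = A + s * cs * P" unfolding c_def y_def v_def P_def using cs by algebra
  have PQ: "P^2 + Q^2 = U^2 + V^2" unfolding P_def Q_def using cs by algebra
  have r2: "r^2 = U^2 + V^2" unfolding r_def by simp
  have r0: "0 \<le> r" unfolding r_def by simp
  have Pr: "\<bar>P\<bar> \<le> r" unfolding r_def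
    by (metis PQ real_sqrt_abs real_sqrt_le_mono le_add_same_cancel1 zero_le_power2)
  have cs1: "\<bar>cs\<bar> \<le> 1" using cs by (metis abs_square_le_1 le_add_same_cancel1 zero_le_power2)
  have scs: "\<bar>s * cs\<bar> \<le> 1" using s cs1 by (simp add: abs_mult mult_le_one)
  have "\<bar>s * cs * P\<bar> \<le> \<bar>P\<bar>" using scs by (simp add: abs_mult mult_left_le_one_le)
  then have ca: "\<bar>c\<bar> \<le> \<bar>A\<bar> + \<bar>P\<bar>" unfolding cc by linarith
  then have c2: "c^2 \<le> (\<bar>A\<bar> + \<bar>P\<bar>)^2" by (rule sq_le_of_abs_le)
  have "(\<bar>A\<bar> + \<bar>P\<bar>)^2 + Q^2 = A^2 + 2 * \<bar>A\<bar> * \<bar>P\<bar> + (P^2 + Q^2)"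
    by (simp add: power2_eq_square algebra_simps)
  also have "\<dots> \<le> A^2 + 2 * \<bar>A\<bar> * r + r^2" using Pr PQ r2 by (simp add: mult_left_mono)
  also have "\<dots> = (\<bar>A\<bar> + r)^2" by (simp add: power2_eq_square algebra_simps)
  also have "\<dots> \<le> 1" using H5 r0 unfolding r_def[symmetric]
    by (metis abs_ge_zero add_nonneg_nonneg power_le_one)
  finally have cQ: "c^2 + Q^2 \<le> 1" using c2 by linarith
  have "y \<noteq> v" using ne unfolding y_def v_def .
  then have "s * sn * Q \<noteq> 0" using yv by auto
  then have Q0: "Q \<noteq> 0" and sn0: "sn \<noteq> 0" by auto
  have Qp: "0 < Q^2" using Q0 by simp
  have den: "Q^2 \<le> 1 - c^2" using cQ by linarith
  have "c^2 < 1" using cQ Qp by linarith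
  then show "\<bar>((A + s * U) + (A + s * (cs^2 - sn^2) * U + 2 * s * cs * sn * V))/2\<bar> < 1"
    unfolding y_def[symmetric] v_def[symmetric] c_def[symmetric] by (simp add: abs_square_less_1)
  have e1: "((y - v)/2)^2 / (1 - c^2) = (s * sn)^2 * Q^2 / (1 - c^2)" unfolding yv by (simp add: power_mult_distrib)
  have pos: "0 < (1 - c^2) * Q^2" using den Qp by (intro mult_pos_pos) linarith+
  have "(s * sn)^2 * Q^2 / (1 - c^2) \<le> (s * sn)^2 * Q^2 / Q^2" by (rule divide_left_mono) (use den pos in auto)
  also have "\<dots> = s^2 * sn^2" using Q0 by (simp add: power_mult_distrib)
  finally have "((y - v)/2)^2 / (1 - c^2) \<le> s^2 * sn^2" unfolding e1 .
  then show "(((A + s * U) - (A + s * (cs^2 - sn^2) * U + 2 * s * cs * sn * V))/2)^2 /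
          (1 - (((A + s * U) + (A + s * (cs^2 - sn^2) * U + 2 * s * cs * sn * V))/2)^2) \<le> s^2 * sn^2"
    unfolding y_def[symmetric] v_def[symmetric] c_def[symmetric] .
qed


lemma Cpart:
  fixes S :: "nat \<Rightarrow> real set" and bv A U V :: "nat \<Rightarrow> real" and s :: real
  assumes s: "0 < s" "s \<le> 1"
  and H1: "\<And>i x. 8 \<le> i \<Longrightarrow> i \<le> 16 \<Longrightarrow> x \<in> S i \<Longrightarrow> \<exists>p q. p^2 + q^2 = s^2 \<and>
            (\<forall>j. 8 \<le> j \<longrightarrow> j < i \<longrightarrow> A j + p * U j + q * V j = bv j) \<and> x = A i + p * U i + q * V i"
  and H2: "\<And>i. 8 \<le> i \<Longrightarrow> i \<le> 16 \<Longrightarrow> bv i = A i + s * U i"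
  and H3: "\<And>i x. 8 \<le> i \<Longrightarrow> i \<le> 16 \<Longrightarrow> (\<forall>j. 8 \<le> j \<longrightarrow> j < i \<longrightarrow> U j = 0) \<Longrightarrow> x \<in> S i \<Longrightarrow> 2 * A i - x \<in> S i"
  and H4: "\<And>i. bv i \<in> S i" and H4': "\<And>i x. 8 \<le> i \<Longrightarrow> i \<le> 16 \<Longrightarrow> x \<in> S i \<Longrightarrow> \<bar>x\<bar> \<le> 1"
  and H5: "\<And>i. 8 \<le> i \<Longrightarrow> i \<le> 16 \<Longrightarrow> \<bar>A i\<bar> + sqrt((U i)^2 + (V i)^2) \<le> 1"
  shows "(\<Sum>i=8..16. D_chi2 (bv i) ((Sup (S i) + Inf (S i))/2)) \<le> s^2"
proof -
  define Dd where "Dd i = D_chi2 (bv i) ((Sup (S i) + Inf (S i))/2)" for i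
  have hA: "(Sup (S i) + Inf (S i))/2 = A i" if "8 \<le> i" "i \<le> 16" "\<forall>j. 8 \<le> j \<longrightarrow> j < i \<longrightarrow> U j = 0" for i
    by (rule hsym[OF H4]) (auto intro: H4'[OF that(1,2)] H3[OF that])
  have zero_before: "Dd i = 0" if "8 \<le> i" "i \<le> 16" "\<forall>j. 8 \<le> j \<longrightarrow> j < i \<longrightarrow> U j = 0" "U i = 0" for i
    unfolding Dd_def hA[OF that(1-3)] using H2[OF that(1,2)] that(4) D_self by simp
  have after_zero: "Dd i = 0" if "\<forall>x\<in>S i. x = bv i" for i
    using one_set[OF H4[of i]] that unfolding Dd_def by auto
  show ?thesis
  proof (cases "\<exists>i. 8 \<le> i \<and> i \<le> 16 \<and> U i \<noteq> 0")
    case False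
    then have "Dd i = 0" if "i \<in> {8..16}" for i using zero_before that by auto
    then have "(\<Sum>i=8..16. Dd i) = 0" by simp
    then show ?thesis unfolding Dd_def by simp
  next
    case True
    then obtain k where k: "8 \<le> k" "k \<le> 16" "U k \<noteq> 0" and kmin: "\<And>j. j < k \<Longrightarrow> \<not>(8 \<le> j \<and> j \<le> 16 \<and> U j \<noteq> 0)"
      using exists_least_iff[of "\<lambda>i. 8 \<le> i \<and> i \<le> 16 \<and> U i \<noteq> 0"] by blast
    have Ub: "\<forall>j. 8 \<le> j \<longrightarrow> j < k \<longrightarrow> U j = 0" using kmin k(2) by auto
    define r where "r = sqrt((U k)^2 + (V k)^2)"
    have rpos: "0 < r" unfolding r_def using k(3) by (simp add: sum_power2_gt_zero_iff)
    have r2: "r^2 = (U k)^2 + (V k)^2" unfolding r_def by simp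
    define cs where "cs = U k / r"
    define sn where "sn = V k / r"
    have "cs^2 + sn^2 = ((U k)^2 + (V k)^2) / r^2" unfolding cs_def sn_def by (simp add: power_divide add_divide_distrib)
    then have csn: "cs^2 + sn^2 = 1" using r2 rpos k(3) by simp
    have cs0: "cs \<noteq> 0" using k(3) rpos by (simp add: cs_def)
    define ps where "ps = s * (cs^2 - sn^2)"
    define qs where "qs = 2 * s * cs * sn"
    have Ukr: "U k = r * cs" "V k = r * sn" using rpos by (simp_all add: cs_def sn_def)
    have two: "x = bv i \<or> (x = A i + ps * U i + qs * V i \<and> (\<forall>j. k < j \<longrightarrow> j < i \<longrightarrow> A j + ps * U j + qs * V j = bv j))"
      if ki: "k < i" "i \<le> 16" "x \<in> S i" for i x
    proof -
      obtain p q where pq: "p^2 + q^2 = s^2" "\<forall>j. 8 \<le> j \<longrightarrow> j < i \<longrightarrow> A j + p * U j + q * V j = bv j" "x = A i + p * U i + q * V i"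
        using H1[of i x] ki k(1) by auto
      have "A k + p * U k + q * V k = bv k" using pq(2) k(1) ki(1) by auto
      then have "p * U k + q * V k = s * U k" using H2[OF k(1,2)] by simp
      then have "r * (p * cs + q * sn) = r * (s * cs)" unfolding Ukr by (simp add: algebra_simps)
      then have "p * cs + q * sn = s * cs" using rpos by simp
      from circ2[OF cs0 csn pq(1) this] have "(p = s \<and> q = 0) \<or> (p = ps \<and> q = qs)" unfolding ps_def qs_def .
      then show ?thesis
      proof
        assume "p = s \<and> q = 0" then show ?thesis using pq(3) H2[of i] ki k(1) by auto
      next
        assume "p = ps \<and> q = qs" then show ?thesis using pq(2,3) k(1) by auto
      qed
    qed
    have Dk: "Dd k \<le> s^2 * cs^2"
    proof -
      have h: "(Sup (S k) + Inf (S k))/2 = A k" by (rule hA[OF k(1,2) Ub])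
      have H5k: "\<bar>A k\<bar> + sqrt((U k)^2 + (V k)^2) \<le> 1" using H5[OF k(1,2)] .
      note kb = kstep_bound[OF s k(3) H5k]
      show ?thesis unfolding Dd_def h H2[OF k(1,2)] D_form[OF kb(1)] cs_def r_def using kb(2) .
    qed
    have cs1: "s^2 * cs^2 \<le> s^2" using csn by (intro mult_right_le_one_le) (auto, metis le_add_same_cancel1 zero_le_power2)
    show ?thesis
    proof (cases "\<exists>i. k < i \<and> i \<le> 16 \<and> A i + ps * U i + qs * V i \<noteq> bv i")
      case False
      have "Dd i \<le> (if i = k then s^2 * cs^2 else 0)" if "i \<in> {8..16}" for i
      proof -
        consider "i < k" | "i = k" | "k < i" by linarith
        then show ?thesis
        proof cases
          case 1 then show ?thesis using zero_before[of i] that Ub kmin[of i] by auto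
        next
          case 2 then show ?thesis using Dk by simp
        next
          case 3
          have "\<forall>x\<in>S i. x = bv i"
          proof
            fix x assume "x \<in> S i"
            then have "x = bv i \<or> x = A i + ps * U i + qs * V i" using two[OF 3] that by auto
            moreover have "A i + ps * U i + qs * V i = bv i" using False 3 that by auto
            ultimately show "x = bv i" by auto
          qed
          then show ?thesis using after_zero 3 by auto
        qed
      qed
      then have "(\<Sum>i=8..16. Dd i) \<le> (\<Sum>i=8..16. if i = k then s^2 * cs^2 else 0)" by (rule sum_mono)
      also have "\<dots> = s^2 * cs^2" using k(1,2) by (simp add: sum.delta)
      finally show ?thesis unfolding Dd_def using cs1 by linarith
    next
      case True
      then obtain k' where k': "k < k'" "k' \<le> 16" "A k' + ps * U k' + qs * V k' \<noteq> bv k'"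
        and k'min: "\<And>j. j < k' \<Longrightarrow> \<not>(k < j \<and> j \<le> 16 \<and> A j + ps * U j + qs * V j \<noteq> bv j)"
        using exists_least_iff[of "\<lambda>i. k < i \<and> i \<le> 16 \<and> A i + ps * U i + qs * V i \<noteq> bv i"] by blast
      have Dk': "Dd k' \<le> s^2 * sn^2"
      proof -
        let ?v = "A k' + ps * U k' + qs * V k'"
        have sub: "S k' \<subseteq> {bv k', ?v}" using two[OF k'(1,2)] by auto
        have H5k: "\<bar>A k'\<bar> + sqrt((U k')^2 + (V k')^2) \<le> 1" using H5 k(1) k' by auto
        have bvk: "bv k' = A k' + s * U k'" using H2 k(1) k' by auto
        have vv: "?v = A k' + s * (cs^2 - sn^2) * U k' + 2 * s * cs * sn * V k'" unfolding ps_def qs_def by (simp add: mult.assoc)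
        have ne: "A k' + s * U k' \<noteq> A k' + s * (cs^2 - sn^2) * U k' + 2 * s * cs * sn * V k'"
          using k'(3) unfolding bvk vv by simp
        note kb = k2_bound[OF s csn H5k ne]
        have "Dd k' \<le> ((bv k' - ?v)/2)^2 / (1 - ((bv k' + ?v)/2)^2)"
          unfolding Dd_def by (rule two_set[OF H4 sub]) (use kb(1) in \<open>simp only: bvk vv\<close>)
        also have "\<dots> \<le> s^2 * sn^2" unfolding bvk vv by (rule kb(2))
        finally show ?thesis .
      qed
      have "Dd i \<le> (if i = k then s^2 * cs^2 else 0) + (if i = k' then s^2 * sn^2 else 0)" if "i \<in> {8..16}" for i
      proof -
        consider "i < k" | "i = k" | "k < i \<and> i < k'" | "i = k'" | "k' < i" by linarith
        then show ?thesis
        proof cases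
          case 1 then show ?thesis using zero_before[of i] that Ub kmin[of i] k'(1) by auto
        next
          case 2 then show ?thesis using Dk k'(1) by simp
        next
          case 3
          have "\<forall>x\<in>S i. x = bv i"
          proof
            fix x assume "x \<in> S i"
            then have "x = bv i \<or> x = A i + ps * U i + qs * V i" using two[of i x] 3 k'(2) by auto
            moreover have "A i + ps * U i + qs * V i = bv i" using k'min[of i] 3 k'(2) by auto
            ultimately show "x = bv i" by auto
          qed
          then show ?thesis using after_zero 3 by auto
        next
          case 4 then show ?thesis using Dk' k'(1) by simp
        next
          case 5
          have "\<forall>x\<in>S i. x = bv i"
          proof
            fix x assume "x \<in> S i"
            then have "x = bv i \<or> (x = A i + ps * U i + qs * V i \<and> (\<forall>j. k < j \<longrightarrow> j < i \<longrightarrow> A j + ps * U j + qs * V j = bv j))"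
              using two[of i x] 5 k'(1) that by auto
            then show "x = bv i" using k'(1,3) 5 by auto
          qed
          then show ?thesis using after_zero 5 k'(1) by auto
        qed
      qed
      then have "(\<Sum>i=8..16. Dd i) \<le> (\<Sum>i=8..16. (if i = k then s^2 * cs^2 else 0) + (if i = k' then s^2 * sn^2 else 0))"
        by (rule sum_mono)
      also have "\<dots> = s^2 * cs^2 + s^2 * sn^2" using k(1,2) k'(1,2) by (simp add: sum.distrib sum.delta)
      also have "\<dots> = s^2 * (cs^2 + sn^2)" by (simp add: algebra_simps)
      also have "\<dots> = s^2" using csn by simp
      finally show ?thesis unfolding Dd_def .
    qed
  qed
qed



definition E11 :: "real^3^3" where "E11 = diag3 1 0 0"
definition Xpq :: "real \<Rightarrow> real \<Rightarrow> real^3^3" where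
  "Xpq p q = vector [vector [1,0,0], vector [0,p,q], vector [0,q,-p]]"

lemma mat_rdistrib: "((A::real^3^3) + B) ** C = A ** C + B ** C"
  by (simp add: matrix_matrix_mult_def vec_eq_iff sum.distrib distrib_right)

lemma F1:
  fixes O1 O2 C :: "real^3^3" and al be :: "real^3" and m s :: real
  assumes O1: "orthogonal_matrix O1" "det O1 = 1" and O2: "orthogonal_matrix O2" "det O2 = 1"
  and m: "m \<noteq> 0"
  and al: "al = m *\<^sub>R (O1 *v axis 1 1)" and be: "be = m *\<^sub>R (O2 *v axis 1 1)"
  and M2: "transpose C *v al = be" and M3: "C *v be = al"
  and M4: "C ** transpose C = s^2 *\<^sub>R mat 1 + m^2 *\<^sub>R (O1 ** E11 ** transpose O1)"
  and M5: "det C = -(s^2)"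
  shows "\<exists>p q. p^2 + q^2 = s^2 \<and> C = O1 ** Xpq p q ** transpose O2"
proof -
  have OO1: "transpose O1 ** O1 = mat 1" "O1 ** transpose O1 = mat 1" using O1 unfolding orthogonal_matrix_def by auto
  have OO2: "transpose O2 ** O2 = mat 1" "O2 ** transpose O2 = mat 1" using O2 unfolding orthogonal_matrix_def by auto
  define X where "X = transpose O1 ** C ** O2"
  have "O1 ** X ** transpose O2 = (O1 ** transpose O1) ** C ** (O2 ** transpose O2)"
    unfolding X_def by (simp only: matrix_mul_assoc)
  then have CX: "C = O1 ** X ** transpose O2" using OO1 OO2 by simp
  define e where "e = (axis 1 1 :: real^3)"
  have "X *v e = transpose O1 *v (C *v (O2 *v e))" unfolding X_def by (simp only: matrix_vector_mul_assoc matrix_mul_assoc)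
  also have "O2 *v e = (1/m) *\<^sub>R be" using be m unfolding e_def by simp
  also have "C *v ((1/m) *\<^sub>R be) = (1/m) *\<^sub>R al" using M3 by (simp add: matrix_vector_mult_scaleR)
  also have "\<dots> = O1 *v e" using al m unfolding e_def by simp
  also have "transpose O1 *v (O1 *v e) = e" using OO1 by (simp only: matrix_vector_mul_assoc matrix_vector_mul_lid)
  finally have Xe: "X *v e = e" .
  have tX: "transpose X = transpose O2 ** transpose C ** O1" unfolding X_def by (simp add: matrix_transpose_mul matrix_mul_assoc)
  have "transpose X *v e = transpose O2 *v (transpose C *v (O1 *v e))" unfolding tX by (simp only: matrix_vector_mul_assoc matrix_mul_assoc)
  also have "O1 *v e = (1/m) *\<^sub>R al" using al m unfolding e_def by simp
  also have "transpose C *v ((1/m) *\<^sub>R al) = (1/m) *\<^sub>R be" using M2 by (simp only: matrix_vector_mult_scaleR)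
  also have "\<dots> = O2 *v e" using be m unfolding e_def by simp
  also have "transpose O2 *v (O2 *v e) = e" using OO2 by (simp only: matrix_vector_mul_assoc matrix_vector_mul_lid)
  finally have XTe: "transpose X *v e = e" .
  have EO: "E11 ** transpose O1 ** O1 = E11" by (simp add: matrix_mul_assoc[symmetric] OO1)
  have "X ** transpose X = X ** (transpose O2 ** transpose C ** O1)" by (simp only: tX)
  also have "\<dots> = transpose O1 ** (C ** (O2 ** transpose O2) ** transpose C) ** O1"
    unfolding X_def by (simp only: matrix_mul_assoc)
  also have "\<dots> = transpose O1 ** (s^2 *\<^sub>R mat 1 + m^2 *\<^sub>R (O1 ** E11 ** transpose O1)) ** O1"
    using OO2 M4 by simp
  also have "\<dots> = s^2 *\<^sub>R mat 1 + m^2 *\<^sub>R E11"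
    by (simp add: EO matrix_add_ldistrib mat_rdistrib matrix_scalar_ac scalar_matrix_assoc[symmetric] matrix_mul_assoc OO1)
  finally have XX: "X ** transpose X = s^2 *\<^sub>R mat 1 + m^2 *\<^sub>R E11" .
  have dX: "det X = -(s^2)" unfolding X_def using O1 O2 M5 by (simp add: det_mul det_transpose)
  have c1: "X$1$1 = 1" "X$2$1 = 0" "X$3$1 = 0" using Xe unfolding e_def
    by (simp_all add: matrix_vector_mult_def sum_3 vec_eq_iff forall_3 axis_def)
  have r1: "X$1$2 = 0" "X$1$3 = 0" using XTe unfolding e_def
    by (simp_all add: matrix_vector_mult_def sum_3 vec_eq_iff forall_3 axis_def transpose_def)
  have "(X ** transpose X)$2$2 = s^2" "(X ** transpose X)$3$3 = s^2" "(X ** transpose X)$2$3 = 0"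
    unfolding XX by (simp_all add: mat_def E11_def diag3_def)
  then have q1: "(X$2$2)^2 + (X$2$3)^2 = s^2" and q2: "(X$3$2)^2 + (X$3$3)^2 = s^2" and q3: "X$2$2 * X$3$2 + X$2$3 * X$3$3 = 0"
    using c1 by (simp_all add: matrix_matrix_mult_def sum_3 transpose_def power2_eq_square)
  have q4: "X$2$2 * X$3$3 - X$2$3 * X$3$2 = -(s^2)" using dX c1 r1 by (simp add: det_3)
  define p where "p = X$2$2"
  define q where "q = X$2$3"
  have "(X$3$2 - q)^2 + (X$3$3 + p)^2 = 0" unfolding p_def q_def using q1 q2 q3 q4 by algebra
  then have "X$3$2 = q" "X$3$3 = - p" by (simp_all add: sum_power2_eq_zero_iff)
  then have XX': "X = Xpq p q" using c1 r1 unfolding Xpq_def p_def q_def by (simp add: vec_eq_iff forall_3)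
  show ?thesis
  proof (intro exI conjI)
    show "p^2 + q^2 = s^2" using q1 unfolding p_def q_def .
    show "C = O1 ** Xpq p q ** transpose O2" using CX XX' by simp
  qed
qed

lemma Mids:
  assumes "pure_state \<phi>"
  shows "transpose (corr_mat \<phi>) *v alpha_vec \<phi> = beta_vec \<phi>"
    "corr_mat \<phi> *v beta_vec \<phi> = alpha_vec \<phi>"
    "corr_mat \<phi> ** transpose (corr_mat \<phi>) = (1 - alpha_vec \<phi> \<bullet> alpha_vec \<phi>) *\<^sub>R mat 1 + (\<chi> j l. alpha_vec \<phi> $ j * alpha_vec \<phi> $ l)"
    "det (corr_mat \<phi>) = -(1 - alpha_vec \<phi> \<bullet> alpha_vec \<phi>)"
proof -
  have P: "bloch \<phi> 1 = 1" using assms pure_iff by auto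
  show "transpose (corr_mat \<phi>) *v alpha_vec \<phi> = beta_vec \<phi>"
    using idI2_1[of \<phi>] idI2_2[of \<phi>] idI2_3[of \<phi>] P
    by (simp add: vec_eq_iff forall_3 matrix_vector_mult_def sum_3 transpose_def corr_mat_def alpha_vec_def beta_vec_def algebra_simps)
  show "corr_mat \<phi> *v beta_vec \<phi> = alpha_vec \<phi>"
    using idI3_1[of \<phi>] idI3_2[of \<phi>] idI3_3[of \<phi>] P
    by (simp add: vec_eq_iff forall_3 matrix_vector_mult_def sum_3 corr_mat_def alpha_vec_def beta_vec_def algebra_simps)
  show "corr_mat \<phi> ** transpose (corr_mat \<phi>) = (1 - alpha_vec \<phi> \<bullet> alpha_vec \<phi>) *\<^sub>R mat 1 + (\<chi> j l. alpha_vec \<phi> $ j * alpha_vec \<phi> $ l)"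
    using idI4_11[of \<phi>] idI4_12[of \<phi>] idI4_13[of \<phi>] idI4_21[of \<phi>] idI4_22[of \<phi>] idI4_23[of \<phi>]
      idI4_31[of \<phi>] idI4_32[of \<phi>] idI4_33[of \<phi>] P
    by (simp add: vec_eq_iff forall_3 matrix_matrix_mult_def sum_3 transpose_def corr_mat_def alpha_vec_def
       inner_vec_def mat_def power2_eq_square algebra_simps)
  show "det (corr_mat \<phi>) = -(1 - alpha_vec \<phi> \<bullet> alpha_vec \<phi>)"
    using idI5[of \<phi>] P
    by (simp add: Let_def det_3 corr_mat_def alpha_vec_def inner_vec_def sum_3 power2_eq_square algebra_simps)
qed

definition rr :: "nat \<Rightarrow> 3" where "rr i = (if i \<le> 10 then 1 else if i \<le> 13 then 2 else 3)"
definition cc :: "nat \<Rightarrow> 3" where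
  "cc i = (if i = 8 \<or> i = 11 \<or> i = 14 then 1 else if i = 9 \<or> i = 12 \<or> i = 15 then 2 else 3)"

lemma bl_ent: assumes "8 \<le> i" "i \<le> 16" shows "bloch \<phi> i = corr_mat \<phi> $ rr i $ cc i"
proof -
  from assms have "i = 8 \<or> i = 9 \<or> i = 10 \<or> i = 11 \<or> i = 12 \<or> i = 13 \<or> i = 14 \<or> i = 15 \<or> i = 16" by presburger
  then show ?thesis by (elim disjE) (simp_all add: corr_mat_def rr_def cc_def)
qed

lemma XE: "(O1 ** Xpq p q ** transpose O2)$j$k = O1$j$1 * O2$k$1 + p * (O1$j$2 * O2$k$2 - O1$j$3 * O2$k$3) + q * (O1$j$2 * O2$k$3 + O1$j$3 * O2$k$2)"
  by (simp add: matrix_matrix_mult_def sum_3 transpose_def Xpq_def algebra_simps)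

lemma rownorm: assumes "orthogonal_matrix (Q::real^3^3)" shows "(Q$j$1)^2 + (Q$j$2)^2 + (Q$j$3)^2 = 1"
proof -
  have "(Q ** transpose Q)$j$j = 1" using assms unfolding orthogonal_matrix_def by (simp add: mat_def)
  then show ?thesis by (simp add: matrix_matrix_mult_def sum_3 transpose_def power2_eq_square)
qed

lemma colnorm: assumes "orthogonal_matrix (Q::real^3^3)" shows "(Q$1$1)^2 + (Q$2$1)^2 + (Q$3$1)^2 = 1"
proof -
  have "(transpose Q ** Q)$1$1 = 1" using assms unfolding orthogonal_matrix_def by (simp add: mat_def)
  then show ?thesis by (simp add: matrix_matrix_mult_def sum_3 transpose_def power2_eq_square)
qed

lemma H5lem:
  fixes a e f b g h :: real
  assumes "a^2 + e^2 + f^2 = 1" "b^2 + g^2 + h^2 = 1"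
  shows "\<bar>a * b\<bar> + sqrt((e * g - f * h)^2 + (e * h + f * g)^2) \<le> 1"
proof -
  have ea: "e^2 + f^2 = 1 - a^2" and eb: "g^2 + h^2 = 1 - b^2" using assms by linarith+
  have "(e * g - f * h)^2 + (e * h + f * g)^2 = (e^2 + f^2) * (g^2 + h^2)" by algebra
  then have eq: "(e * g - f * h)^2 + (e * h + f * g)^2 = (1 - a^2) * (1 - b^2)" using ea eb by simp
  have "0 \<le> e^2 + f^2" "0 \<le> g^2 + h^2" by simp_all
  then have a1: "0 \<le> 1 - a^2" "0 \<le> 1 - b^2" using ea eb by linarith+
  define ra where "ra = sqrt(1 - a^2)"
  define rb where "rb = sqrt(1 - b^2)"
  have ra2: "ra^2 = 1 - a^2" "rb^2 = 1 - b^2" unfolding ra_def rb_def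
    by (rule real_sqrt_pow2[OF a1(1)], rule real_sqrt_pow2[OF a1(2)])
  have ra0: "0 \<le> ra" "0 \<le> rb" unfolding ra_def rb_def
    by (rule real_sqrt_ge_zero[OF a1(1)], rule real_sqrt_ge_zero[OF a1(2)])
  have sq: "sqrt((e * g - f * h)^2 + (e * h + f * g)^2) = ra * rb" unfolding eq ra_def rb_def by (simp add: real_sqrt_mult)
  have "(\<bar>a\<bar> * \<bar>b\<bar> + ra * rb)^2 + (\<bar>a\<bar> * rb - ra * \<bar>b\<bar>)^2 = (\<bar>a\<bar>^2 + ra^2) * (\<bar>b\<bar>^2 + rb^2)" by algebra
  also have "\<dots> = 1" using ra2 by simp
  finally have "(\<bar>a\<bar> * \<bar>b\<bar> + ra * rb)^2 \<le> 1^2" by (metis le_add_same_cancel1 power_one zero_le_power2)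
  then have "\<bar>a\<bar> * \<bar>b\<bar> + ra * rb \<le> 1" by (rule power2_le_imp_le) simp
  then show ?thesis unfolding sq by (simp add: abs_mult)
qed

lemma F2:
  fixes O1 O2 :: "real^3^3" and m :: real and \<phi> :: "nat \<Rightarrow> complex"
  assumes cn: "(O1$1$1)^2 + (O1$2$1)^2 + (O1$3$1)^2 = 1" and m: "m \<noteq> 0"
  and p\<phi>: "pure_state \<phi>"
  and al: "bloch \<phi> 2 = m * O1$1$1" "bloch \<phi> 3 = m * O1$2$1" "bloch \<phi> 4 = m * O1$3$1"
  and be: "bloch \<phi> 5 = m * O2$1$1" "bloch \<phi> 6 = m * O2$2$1" "bloch \<phi> 7 = m * O2$3$1"
  shows "pure_state (Tm (O1$1$1) (O1$2$1) (O1$3$1) \<phi>)"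
    and "\<And>j. 1 \<le> j \<Longrightarrow> j \<le> 7 \<Longrightarrow> bloch (Tm (O1$1$1) (O1$2$1) (O1$3$1) \<phi>) j = bloch \<phi> j"
    and "\<And>i. 8 \<le> i \<Longrightarrow> i \<le> 16 \<Longrightarrow> bloch (Tm (O1$1$1) (O1$2$1) (O1$3$1) \<phi>) i = 2 * (O1$rr i$1 * O2$cc i$1) - bloch \<phi> i"
proof -
  have P: "bloch \<phi> 1 = 1" using p\<phi> pure_iff by auto
  have t1: "bloch (Tm (O1$1$1) (O1$2$1) (O1$3$1) \<phi>) 1 = bloch \<phi> 1" unfolding T1 cn by simp
  then show "pure_state (Tm (O1$1$1) (O1$2$1) (O1$3$1) \<phi>)" using P pure_iff by simp
  have na: "O1$1$1 * bloch \<phi> 2 + O1$2$1 * bloch \<phi> 3 + O1$3$1 * bloch \<phi> 4 = m"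
    using cn unfolding al by (simp add: power2_eq_square algebra_simps) (metis distrib_left mult.right_neutral)
  have "m * (O1$1$1 * bloch \<phi> 8 + O1$2$1 * bloch \<phi> 11 + O1$3$1 * bloch \<phi> 14) = m * O2$1$1"
    using idI2_1[of \<phi>] P al be by (simp add: algebra_simps)
  then have sa1: "O1$1$1 * bloch \<phi> 8 + O1$2$1 * bloch \<phi> 11 + O1$3$1 * bloch \<phi> 14 = O2$1$1" using m by simp
  have "m * (O1$1$1 * bloch \<phi> 9 + O1$2$1 * bloch \<phi> 12 + O1$3$1 * bloch \<phi> 15) = m * O2$2$1"
    using idI2_2[of \<phi>] P al be by (simp add: algebra_simps)
  then have sa2: "O1$1$1 * bloch \<phi> 9 + O1$2$1 * bloch \<phi> 12 + O1$3$1 * bloch \<phi> 15 = O2$2$1" using m by simp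
  have "m * (O1$1$1 * bloch \<phi> 10 + O1$2$1 * bloch \<phi> 13 + O1$3$1 * bloch \<phi> 16) = m * O2$3$1"
    using idI2_3[of \<phi>] P al be by (simp add: algebra_simps)
  then have sa3: "O1$1$1 * bloch \<phi> 10 + O1$2$1 * bloch \<phi> 13 + O1$3$1 * bloch \<phi> 16 = O2$3$1" using m by simp
  show "bloch (Tm (O1$1$1) (O1$2$1) (O1$3$1) \<phi>) j = bloch \<phi> j" if "1 \<le> j" "j \<le> 7" for j
  proof -
    from that have "j = 1 \<or> j = 2 \<or> j = 3 \<or> j = 4 \<or> j = 5 \<or> j = 6 \<or> j = 7" by presburger
    then show ?thesis
      by (elim disjE; hypsubst; simp only: t1 Ta1 Ta2 Ta3 Tb1 Tb2 Tb3 na cn; simp add: al)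
  qed
  show "bloch (Tm (O1$1$1) (O1$2$1) (O1$3$1) \<phi>) i = 2 * (O1$rr i$1 * O2$cc i$1) - bloch \<phi> i" if "8 \<le> i" "i \<le> 16" for i
  proof -
    from that have "i = 8 \<or> i = 9 \<or> i = 10 \<or> i = 11 \<or> i = 12 \<or> i = 13 \<or> i = 14 \<or> i = 15 \<or> i = 16" by presburger
    then show ?thesis
      by (elim disjE; hypsubst; simp only: Tc11 Tc12 Tc13 Tc21 Tc22 Tc23 Tc31 Tc32 Tc33 sa1 sa2 sa3 cn; simp add: rr_def cc_def)
  qed
qed



theorem lemma5:
  fixes \<psi> :: "nat \<Rightarrow> complex" and \<theta> :: real and O1 O2 :: "real^3^3"
  assumes "pure_state \<psi>"
    and "0 \<le> \<theta>" and "\<theta> \<le> pi / 2"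
    and "orthogonal_matrix O1" and "det O1 = 1"
    and "orthogonal_matrix O2" and "det O2 = 1"
    and "alpha_vec \<psi> = O1 *v vector [cos \<theta>, 0, 0]"
    and "beta_vec \<psi> = O2 *v vector [cos \<theta>, 0, 0]"
    and "corr_mat \<psi> = O1 ** diag3 1 (sin \<theta>) (- sin \<theta>) ** transpose O2"
    and "0 < \<bar>cos \<theta>\<bar>" and "\<bar>cos \<theta>\<bar> < 1"
  shows "I_chi2_post (bloch \<psi>) < 2"
proof -
  define m where "m = cos \<theta>"
  define s where "s = sin \<theta>"
  have m0: "m \<noteq> 0" using assms(11) by (auto simp: m_def)
  have m1: "m^2 < 1" using assms(12) by (simp add: m_def abs_square_less_1)
  have ms: "m^2 + s^2 = 1" using sin_cos_squared_add[of \<theta>] by (simp add: m_def s_def add.commute)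
  have "0 \<le> s" unfolding s_def using assms(2,3) by (intro sin_ge_zero) auto
  moreover have "s \<noteq> 0" using ms m1 by auto
  ultimately have s0: "0 < s" by simp
  have s1: "s \<le> 1" by (simp add: s_def)
  have P: "pure_state \<psi>" by (rule assms(1))
  have P1: "bloch \<psi> 1 = 1" using P pure_iff by auto
  have "(alpha_vec \<psi>)$1 = (O1 *v vector [cos \<theta>, 0, 0])$1" "(alpha_vec \<psi>)$2 = (O1 *v vector [cos \<theta>, 0, 0])$2"
    "(alpha_vec \<psi>)$3 = (O1 *v vector [cos \<theta>, 0, 0])$3" using assms(8) by simp_all
  then have al: "bloch \<psi> 2 = m * O1$1$1" "bloch \<psi> 3 = m * O1$2$1" "bloch \<psi> 4 = m * O1$3$1"
    by (simp_all add: alpha_vec_def matrix_vector_mult_def sum_3 m_def)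
  have "(beta_vec \<psi>)$1 = (O2 *v vector [cos \<theta>, 0, 0])$1" "(beta_vec \<psi>)$2 = (O2 *v vector [cos \<theta>, 0, 0])$2"
    "(beta_vec \<psi>)$3 = (O2 *v vector [cos \<theta>, 0, 0])$3" using assms(9) by simp_all
  then have be: "bloch \<psi> 5 = m * O2$1$1" "bloch \<psi> 6 = m * O2$2$1" "bloch \<psi> 7 = m * O2$3$1"
    by (simp_all add: beta_vec_def matrix_vector_mult_def sum_3 m_def)
  have "diag3 1 (sin \<theta>) (- sin \<theta>) = Xpq s 0" by (simp add: diag3_def Xpq_def s_def)
  then have corr: "corr_mat \<psi> = O1 ** Xpq s 0 ** transpose O2" using assms(10) by simp
  have cn1: "(O1$1$1)^2 + (O1$2$1)^2 + (O1$3$1)^2 = 1" by (rule colnorm[OF assms(4)])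
  have al_vec: "alpha_vec \<psi> = m *\<^sub>R (O1 *v axis 1 1)"
    using al by (simp add: vec_eq_iff forall_3 alpha_vec_def matrix_vector_mult_def sum_3 axis_def)
  have be_vec: "beta_vec \<psi> = m *\<^sub>R (O2 *v axis 1 1)"
    using be by (simp add: vec_eq_iff forall_3 beta_vec_def matrix_vector_mult_def sum_3 axis_def)
  have aa0: "(bloch \<psi> 2)^2 + (bloch \<psi> 3)^2 + (bloch \<psi> 4)^2 = m^2"
  proof -
    have "(bloch \<psi> 2)^2 + (bloch \<psi> 3)^2 + (bloch \<psi> 4)^2 = m^2 * ((O1$1$1)^2 + (O1$2$1)^2 + (O1$3$1)^2)"
      unfolding al by (simp add: power_mult_distrib algebra_simps)
    then show ?thesis using cn1 by simp
  qed
  have aa: "alpha_vec \<psi> \<bullet> alpha_vec \<psi> = m^2"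
    using aa0 by (simp add: alpha_vec_def inner_vec_def sum_3 power2_eq_square)
  have outer: "(\<chi> j l. alpha_vec \<psi> $ j * alpha_vec \<psi> $ l) = m^2 *\<^sub>R (O1 ** E11 ** transpose O1)"
  proof -
    have E: "(O1 ** E11 ** transpose O1)$j$l = O1$j$1 * O1$l$1" for j l
      by (simp add: matrix_matrix_mult_def sum_3 E11_def diag3_def transpose_def)
    have A: "alpha_vec \<psi> $ j = m * O1$j$1" for j
      using al_vec by (simp add: matrix_vector_mult_def sum_3 axis_def)
    show ?thesis by (simp add: vec_eq_iff E A power2_eq_square)
  qed
  have F1\<phi>: "\<exists>p q. p^2 + q^2 = s^2 \<and> corr_mat \<phi> = O1 ** Xpq p q ** transpose O2"
    if p\<phi>: "pure_state \<phi>" and ea: "alpha_vec \<phi> = alpha_vec \<psi>" and eb: "beta_vec \<phi> = beta_vec \<psi>" for \<phi>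
  proof (rule F1[OF assms(4,5,6,7) m0 al_vec be_vec])
    note Mi = Mids[OF p\<phi>, unfolded ea eb]
    show "transpose (corr_mat \<phi>) *v alpha_vec \<psi> = beta_vec \<psi>" by (rule Mi(1))
    show "corr_mat \<phi> *v beta_vec \<psi> = alpha_vec \<psi>" by (rule Mi(2))
    have "1 - alpha_vec \<psi> \<bullet> alpha_vec \<psi> = s^2" using aa ms by simp
    then show "corr_mat \<phi> ** transpose (corr_mat \<phi>) = s^2 *\<^sub>R mat 1 + m^2 *\<^sub>R (O1 ** E11 ** transpose O1)"
      using Mi(3) outer by simp
    show "det (corr_mat \<phi>) = -(s^2)" using Mi(4) aa ms by simp
  qed
  define Af where "Af i = O1$rr i$1 * O2$cc i$1" for i
  define Uf where "Uf i = O1$rr i$2 * O2$cc i$2 - O1$rr i$3 * O2$cc i$3" for i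
  define Vf where "Vf i = O1$rr i$2 * O2$cc i$3 + O1$rr i$3 * O2$cc i$2" for i
  have ent: "bloch \<phi> i = Af i + p * Uf i + q * Vf i"
    if "corr_mat \<phi> = O1 ** Xpq p q ** transpose O2" "8 \<le> i" "i \<le> 16" for \<phi> p q i
    unfolding bl_ent[OF that(2,3)] that(1) XE Af_def Uf_def Vf_def ..
  have H2: "bloch \<psi> i = Af i + s * Uf i" if "8 \<le> i" "i \<le> 16" for i
    using ent[OF corr that] by simp
  define S where "S i = cond_vals (bloch \<psi>) i" for i
  have pre_ab: "alpha_vec \<phi> = alpha_vec \<psi> \<and> beta_vec \<phi> = beta_vec \<psi>"
    if "\<And>j. 1 \<le> j \<Longrightarrow> j < i \<Longrightarrow> bloch \<phi> j = bloch \<psi> j" "8 \<le> i" for \<phi> i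
    using that(1)[of 2] that(1)[of 3] that(1)[of 4] that(1)[of 5] that(1)[of 6] that(1)[of 7] that(2)
    by (simp add: alpha_vec_def beta_vec_def)
  have Cb: "(\<Sum>i=8..16. D_chi2 (bloch \<psi> i) ((Sup (S i) + Inf (S i))/2)) \<le> s^2"
  proof (rule Cpart[where A=Af and U=Uf and V=Vf and bv="bloch \<psi>" and S=S, OF s0 s1])
    fix i :: nat and x assume i: "8 \<le> i" "i \<le> 16" and xS: "x \<in> S i"
    obtain \<phi> where p\<phi>: "pure_state \<phi>" and pre: "\<And>j. 1 \<le> j \<Longrightarrow> j < i \<Longrightarrow> bloch \<phi> j = bloch \<psi> j"
      and x: "x = bloch \<phi> i" by (rule cv_E[OF xS[unfolded S_def]], blast)
    have ab: "alpha_vec \<phi> = alpha_vec \<psi>" "beta_vec \<phi> = beta_vec \<psi>" using pre_ab[OF pre i(1)] by auto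
    obtain p q where pq: "p^2 + q^2 = s^2" "corr_mat \<phi> = O1 ** Xpq p q ** transpose O2" using F1\<phi>[OF p\<phi> ab] by blast
    show "\<exists>p q. p^2 + q^2 = s^2 \<and> (\<forall>j. 8 \<le> j \<longrightarrow> j < i \<longrightarrow> Af j + p * Uf j + q * Vf j = bloch \<psi> j) \<and> x = Af i + p * Uf i + q * Vf i"
    proof (intro exI conjI allI impI)
      show "p^2 + q^2 = s^2" by (rule pq(1))
      fix j assume "8 \<le> j" "j < i"
      then show "Af j + p * Uf j + q * Vf j = bloch \<psi> j" using ent[OF pq(2), of j] pre[of j] i by simp
    next
      show "x = Af i + p * Uf i + q * Vf i" using ent[OF pq(2) i] x by simp
    qed
  next
    fix i :: nat assume "8 \<le> i" "i \<le> 16" then show "bloch \<psi> i = Af i + s * Uf i" by (rule H2)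
  next
    fix i :: nat and x assume i: "8 \<le> i" "i \<le> 16" and U0: "\<forall>j. 8 \<le> j \<longrightarrow> j < i \<longrightarrow> Uf j = 0" and xS: "x \<in> S i"
    obtain \<phi> where p\<phi>: "pure_state \<phi>" and pre: "\<And>j. 1 \<le> j \<Longrightarrow> j < i \<Longrightarrow> bloch \<phi> j = bloch \<psi> j"
      and x: "x = bloch \<phi> i" by (rule cv_E[OF xS[unfolded S_def]], blast)
    have alp: "bloch \<phi> 2 = m * O1$1$1" "bloch \<phi> 3 = m * O1$2$1" "bloch \<phi> 4 = m * O1$3$1"
      "bloch \<phi> 5 = m * O2$1$1" "bloch \<phi> 6 = m * O2$2$1" "bloch \<phi> 7 = m * O2$3$1"
      using pre[of 2] pre[of 3] pre[of 4] pre[of 5] pre[of 6] pre[of 7] i al be by auto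
    note FF = F2[OF cn1 m0 p\<phi> alp]
    let ?T = "Tm (O1$1$1) (O1$2$1) (O1$3$1) \<phi>"
    have "bloch ?T i \<in> S i" unfolding S_def
    proof (rule cv_I[OF FF(1)])
      fix j assume j: "1 \<le> j" "j < i"
      show "bloch ?T j = bloch \<psi> j"
      proof (cases "j \<le> 7")
        case True then show ?thesis using FF(2)[OF j(1) True] pre[OF j] by simp
      next
        case False
        then have j8: "8 \<le> j" "j \<le> 16" using j i by auto
        have "bloch ?T j = 2 * Af j - bloch \<phi> j" using FF(3)[OF j8] unfolding Af_def .
        also have "\<dots> = bloch \<psi> j" using pre[OF j] H2[OF j8] U0 j8 j by auto
        finally show ?thesis .
      qed
    qed
    moreover have "bloch ?T i = 2 * Af i - x" using FF(3)[OF i] x unfolding Af_def by simp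
    ultimately show "2 * Af i - x \<in> S i" by simp
  next
    fix i :: nat show "bloch \<psi> i \<in> S i" unfolding S_def by (rule cv_mem[OF P])
  next
    fix i :: nat and x assume i: "8 \<le> i" "i \<le> 16" and xS: "x \<in> S i"
    obtain \<phi> where p\<phi>: "pure_state \<phi>" and x: "x = bloch \<phi> i"
      by (rule cv_E[OF xS[unfolded S_def]], blast)
    show "\<bar>x\<bar> \<le> 1" using bnd[OF p\<phi>] i x by simp
  next
    fix i :: nat assume "8 \<le> i" "i \<le> 16"
    show "\<bar>Af i\<bar> + sqrt((Uf i)^2 + (Vf i)^2) \<le> 1"
      unfolding Af_def Uf_def Vf_def by (rule H5lem[OF rownorm[OF assms(4)] rownorm[OF assms(6)]])
  qed
  note ab = step_ab[OF P]
  have hm: "h_mid (bloch \<psi>) i = (Sup (S i) + Inf (S i))/2" for i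
    unfolding h_mid_def b_max_def b_min_def S_def ..
  have split: "{2..16::nat} = {2..7} \<union> {8..16}" by auto
  have six: "{2..7::nat} = {2,3,4,5,6,7}" by auto
  have I: "I_chi2_post (bloch \<psi>) = (\<Sum>i\<in>{2..7}. D_chi2 (bloch \<psi> i) (h_mid (bloch \<psi>) i)) + (\<Sum>i=8..16. D_chi2 (bloch \<psi> i) (h_mid (bloch \<psi>) i))"
    unfolding I_chi2_post_def split by (rule sum.union_disjoint) auto
  have "(\<Sum>i\<in>{2..7}. D_chi2 (bloch \<psi> i) (h_mid (bloch \<psi>) i)) =
      D_chi2 (bloch \<psi> 2) (h_mid (bloch \<psi>) 2) + (D_chi2 (bloch \<psi> 3) (h_mid (bloch \<psi>) 3) + (D_chi2 (bloch \<psi> 4) (h_mid (bloch \<psi>) 4) +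
      (D_chi2 (bloch \<psi> 5) (h_mid (bloch \<psi>) 5) + (D_chi2 (bloch \<psi> 6) (h_mid (bloch \<psi>) 6) + D_chi2 (bloch \<psi> 7) (h_mid (bloch \<psi>) 7)))))"
    unfolding six by simp
  also have "\<dots> \<le> (bloch \<psi> 2)^2 + ((bloch \<psi> 3)^2 + ((bloch \<psi> 4)^2 + ((bloch \<psi> 5)^2 + ((bloch \<psi> 6)^2 + (bloch \<psi> 7)^2))))"
    using ab by linarith
  also have "\<dots> = 2 * m^2" using aa0 idI1[of \<psi>] by linarith
  finally have s27: "(\<Sum>i\<in>{2..7}. D_chi2 (bloch \<psi> i) (h_mid (bloch \<psi>) i)) \<le> 2 * m^2" .
  have s816: "(\<Sum>i=8..16. D_chi2 (bloch \<psi> i) (h_mid (bloch \<psi>) i)) \<le> s^2" using Cb unfolding hm .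
  show ?thesis using I s27 s816 ms m1 by linarith
qed


end
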